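(* Let $q$ be a prime, $A$ a group of exponent $q$ and order $q^3$, and $B$ a subgroup of order $q$ of $Z(A)$. Suppose $A$ acts by automorphisms on a finite group $G$ of order coprime to $q$ with $G=PH$, where $P$ and $H$ are $A$-invariant subgroups, $P$ is a normal $p$-subgroup of $G$ for a prime $p$, and $H$ is a nilpotent $p'$-subgroup. If $P$ is abelian, then $[P,C_H(B)]$ is contained in $\prod_{a\in A^{\#}}[C_P(a),C_H(a)]$.
   Context: $A^{\#}$ is the set of nontrivial elements of $A$; $C_X(Y)$ denotes the fixed points in $X$ of $Y$; $[X,Y]$ is the subgroup generated by commutators $[x,y]$, $x\in X$, $y\in Y$. *)

theory Defs
  imports "HOL-Computational_Algebra.Primes" "HOL-Algebra.Group_Action" "HOL-Algebra.Generated_Groups"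
begin

definition comm_subgroup :: "('g, 'b) monoid_scheme \<Rightarrow> 'g set \<Rightarrow> 'g set \<Rightarrow> 'g set" where
  "comm_subgroup G S T =
     generate G ((\<lambda>(x, y). m_inv G x \<otimes>\<^bsub>G\<^esub> m_inv G y \<otimes>\<^bsub>G\<^esub> x \<otimes>\<^bsub>G\<^esub> y) ` (S \<times> T))"

primrec lower_central :: "('g, 'b) monoid_scheme \<Rightarrow> 'g set \<Rightarrow> nat \<Rightarrow> 'g set" where
  "lower_central G H 0 = H"
| "lower_central G H (Suc n) = comm_subgroup G (lower_central G H n) H"

definition nilpotent_subgroup :: "('g, 'b) monoid_scheme \<Rightarrow> 'g set \<Rightarrow> bool" where
  "nilpotent_subgroup G H \<longleftrightarrow> subgroup H G \<and> (\<exists>n. lower_central G H n = {\<one>\<^bsub>G\<^esub>})"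

definition group_center :: "('a, 'b) monoid_scheme \<Rightarrow> 'a set" where
  "group_center A = {z \<in> carrier A. \<forall>x \<in> carrier A. z \<otimes>\<^bsub>A\<^esub> x = x \<otimes>\<^bsub>A\<^esub> z}"

definition fixed_points :: "('a \<Rightarrow> 'g \<Rightarrow> 'g) \<Rightarrow> 'g set \<Rightarrow> 'a set \<Rightarrow> 'g set" where
  "fixed_points \<phi> S T = {x \<in> S. \<forall>y \<in> T. \<phi> y x = x}"

end

theory Submission
  imports Defs "HOL-Number_Theory.Residues"
begin

lemma funpow_hom:
  assumes "group G" "f \<in> hom G G"
  shows "f ^^ n \<in> hom G G"
proof (induction n)
  case 0
  then show ?case by (simp add: hom_def)
next
  case (Suc n)
  show ?case by (simp only: funpow.simps(2)) (rule hom_compose[OF Suc.IH assms(2)])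
qed

lemma funpow_closed:
  assumes "f \<in> hom G G" "x \<in> carrier G"
  shows "(f ^^ n) x \<in> carrier G"
  using assms by (induction n) (auto simp: hom_def)

lemma funpow_comm:
  assumes "\<And>x. x \<in> S \<Longrightarrow> f (g x) = g (f x)"
    and "\<And>x. x \<in> S \<Longrightarrow> f x \<in> S" "\<And>x. x \<in> S \<Longrightarrow> g x \<in> S" "x \<in> S"
  shows "(f ^^ i) ((g ^^ j) x) = (g ^^ j) ((f ^^ i) x)"
proof -
  have cl: "\<And>x n. x \<in> S \<Longrightarrow> (g ^^ n) x \<in> S" "\<And>x n. x \<in> S \<Longrightarrow> (f ^^ n) x \<in> S"
    subgoal for x n using assms(3) by (induction n) auto
    subgoal for x n using assms(2) by (induction n) auto
    done
  have 1: "\<And>x. x \<in> S \<Longrightarrow> f ((g ^^ j) x) = (g ^^ j) (f x)"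
  proof (induction j)
    case 0 then show ?case by simp
  next
    case (Suc j) then show ?case using assms(1) cl by simp
  qed
  show ?thesis using assms(4)
  proof (induction i arbitrary: x)
    case 0 then show ?case by simp
  next
    case (Suc i)
    have "(f ^^ Suc i) ((g ^^ j) x) = f ((f ^^ i) ((g ^^ j) x))" by simp
    also have "... = f ((g ^^ j) ((f ^^ i) x))" using Suc by simp
    also have "... = (g ^^ j) (f ((f ^^ i) x))" using 1 cl Suc by simp
    finally show ?case by simp
  qed
qed

lemma funpow_mod:
  assumes "\<And>x. x \<in> S \<Longrightarrow> (f ^^ q) x = x" "\<And>x. x \<in> S \<Longrightarrow> f x \<in> S" "x \<in> S"
  shows "(f ^^ n) x = (f ^^ (n mod q)) x"
proof -
  have cl: "\<And>x n. x \<in> S \<Longrightarrow> (f ^^ n) x \<in> S"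
    subgoal for x n using assms(2) by (induction n) auto done
  have k: "\<And>x. x \<in> S \<Longrightarrow> (f ^^ (q * k)) x = x" for k
  proof (induction k)
    case 0 then show ?case by simp
  next
    case (Suc k)
    have "(f ^^ (q * Suc k)) x = (f ^^ q) ((f ^^ (q * k)) x)"
      by (simp add: funpow_add)
    then show ?case using Suc assms(1) cl by simp
  qed
  have "n = q * (n div q) + n mod q" by simp
  then have "(f ^^ n) x = (f ^^ (q * (n div q))) ((f ^^ (n mod q)) x)"
    by (metis comp_apply funpow_add)
  then show ?thesis using k cl assms(3) by simp
qed

lemma mult_perm:
  fixes q i :: nat
  assumes "prime q" "0 < i" "i < q"
  shows "inj_on (\<lambda>j. i * j mod q) {..<q}" "(\<lambda>j. i * j mod q) ` {..<q} = {..<q}"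
proof -
  have "\<not> q dvd i"
  proof
    assume "q dvd i" then have "q \<le> i" using assms(2) by (simp add: dvd_imp_le)
    then show False using assms(3) by simp
  qed
  then have "coprime q i" using assms(1) by (simp add: prime_imp_coprime)
  then have cop: "coprime i q" by (simp add: coprime_commute)
  show inj: "inj_on (\<lambda>j. i * j mod q) {..<q}"
  proof (rule inj_onI)
    fix j k assume jk: "j \<in> {..<q}" "k \<in> {..<q}" "i * j mod q = i * k mod q"
    then have "[i * j = i * k] (mod q)" by (simp add: cong_def)
    then have "[j = k] (mod q)" using cop cong_mult_lcancel_nat by blast
    then show "j = k" using jk by (simp add: cong_def)
  qed
  show "(\<lambda>j. i * j mod q) ` {..<q} = {..<q}"
    by (rule endo_inj_surj) (use inj assms in auto)
qed

context comm_group begin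

lemma finprod_swap:
  assumes "finite I" "finite J" "\<And>i j. i \<in> I \<Longrightarrow> j \<in> J \<Longrightarrow> f i j \<in> carrier G"
  shows "(\<Otimes>i\<in>I. \<Otimes>j\<in>J. f i j) = (\<Otimes>j\<in>J. \<Otimes>i\<in>I. f i j)"
  using assms(1,3)
proof (induction I rule: finite_induct)
  case empty then show ?case by simp
next
  case (insert a I)
  have "(\<Otimes>i\<in>insert a I. \<Otimes>j\<in>J. f i j) = (\<Otimes>j\<in>J. f a j) \<otimes> (\<Otimes>i\<in>I. \<Otimes>j\<in>J. f i j)"
    by (rule finprod_insert) (use insert in \<open>auto intro!: finprod_closed simp: Pi_def\<close>)
  also have "... = (\<Otimes>j\<in>J. f a j) \<otimes> (\<Otimes>j\<in>J. \<Otimes>i\<in>I. f i j)" using insert by simp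
  also have "... = (\<Otimes>j\<in>J. f a j \<otimes> (\<Otimes>i\<in>I. f i j))"
    by (rule finprod_multf[symmetric]) (use insert in \<open>auto intro!: finprod_closed simp: Pi_def\<close>)
  also have "... = (\<Otimes>j\<in>J. \<Otimes>i\<in>insert a I. f i j)"
    by (rule finprod_cong') (use insert in \<open>auto intro!: finprod_closed simp: Pi_def\<close>)
  finally show ?case .
qed

lemma hom_finprod:
  assumes "h \<in> hom G G" "f \<in> I \<rightarrow> carrier G"
  shows "h (finprod G f I) = finprod G (\<lambda>i. h (f i)) I"
proof -
  interpret gh: group_hom G G h
    using assms(1) by (simp add: group_hom_def group_hom_axioms_def is_group)
  have hc: "\<And>x. x \<in> carrier G \<Longrightarrow> h x \<in> carrier G" using assms(1) by (auto simp: hom_def Pi_def)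
  show ?thesis
  proof (cases "finite I")
    case False
    then show ?thesis by simp
  next
    case True
    then show ?thesis using assms(2)
    proof (induction I rule: finite_induct)
      case empty then show ?case by simp
    next
      case (insert a I)
      then have fa: "f a \<in> carrier G" and fI: "f \<in> I \<rightarrow> carrier G" by auto
      have hI: "(\<lambda>i. h (f i)) \<in> insert a I \<rightarrow> carrier G" using insert.prems hc by (auto simp: Pi_iff)
      have hI2: "(\<lambda>i. h (f i)) \<in> I \<rightarrow> carrier G" using fI hc by (auto simp: Pi_iff)
      have "h (finprod G f (insert a I)) = h (f a \<otimes> finprod G f I)"
        using insert fa fI by simp
      also have "... = h (f a) \<otimes> h (finprod G f I)" using fa fI by simp
      also have "... = h (f a) \<otimes> finprod G (\<lambda>i. h (f i)) I" using insert fI by simp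
      also have "... = finprod G (\<lambda>i. h (f i)) (insert a I)"
        using insert hI hI2 hc fa by simp
      finally show ?case .
    qed
  qed
qed

lemma cycl_shift:
  assumes "\<And>i. F i \<in> carrier G" "F q = F 0"
  shows "(\<Otimes>i\<in>{..<q}. F (Suc i)) = (\<Otimes>i\<in>{..<q}. F i)"
proof (cases q)
  case 0 then show ?thesis by simp
next
  case (Suc n)
  have "finprod G F {..Suc n} = finprod G (\<lambda>i. F (Suc i)) {..n} \<otimes> F 0"
    by (rule finprod_Suc2) (use assms in auto)
  moreover have "finprod G F {..Suc n} = F (Suc n) \<otimes> finprod G F {..n}"
    by (rule finprod_Suc) (use assms in auto)
  ultimately have "finprod G (\<lambda>i. F (Suc i)) {..n} \<otimes> F 0 = finprod G F {..n} \<otimes> F 0"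
    using assms Suc by (simp add: m_comm)
  then have "finprod G (\<lambda>i. F (Suc i)) {..n} = finprod G F {..n}"
    using assms by (simp add: Pi_def)
  then show ?thesis using Suc by (simp add: lessThan_Suc_atMost)
qed

end

context comm_group begin
lemma main_identity:
  assumes hq: "prime q"
    and ha: "\<alpha> \<in> hom G G" and hg: "\<gamma> \<in> hom G G"
    and comm: "\<And>x. x \<in> carrier G \<Longrightarrow> \<alpha> (\<gamma> x) = \<gamma> (\<alpha> x)"
    and aq: "\<And>x. x \<in> carrier G \<Longrightarrow> (\<alpha>^^q) x = x"
    and gq: "\<And>x. x \<in> carrier G \<Longrightarrow> (\<gamma>^^q) x = x"
    and v: "v \<in> carrier G"
  shows "v [^] q \<otimes> (\<Otimes>i\<in>{..<q}. \<Otimes>t\<in>{..<q}. (\<alpha>^^i) ((\<gamma>^^t) v))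
       = (\<Otimes>j\<in>{..<q}. \<Otimes>i\<in>{..<q}. (\<alpha>^^i) ((\<gamma>^^(i*j)) v)) \<otimes> (\<Otimes>t\<in>{..<q}. (\<gamma>^^t) v)"
proof -
  define F where "F i t = (\<alpha>^^i) ((\<gamma>^^t) v)" for i t
  have Fc: "F i t \<in> carrier G" for i t
    unfolding F_def using ha hg v by (simp add: funpow_closed)
  have gc: "\<And>x. x \<in> carrier G \<Longrightarrow> \<gamma> x \<in> carrier G" using hg by (simp add: hom_def Pi_def)
  have Fmod: "F i t = F i (t mod q)" for i t
    unfolding F_def using funpow_mod[where f=\<gamma> and q=q and S="carrier G" and x=v and n=t] gq gc v by simp
  have q0: "0 < q" using hq prime_gt_0_nat by blast
  define Gi where "Gi i = (\<Otimes>j\<in>{..<q}. F i (i*j))" for i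
  have a: "(\<Otimes>j\<in>{..<q}. \<Otimes>i\<in>{..<q}. F i (i*j)) = (\<Otimes>i\<in>{..<q}. Gi i)"
    unfolding Gi_def by (rule finprod_swap[symmetric]) (auto simp: Fc)
  have G0: "Gi 0 = v [^] q"
    unfolding Gi_def F_def by (simp add: finprod_const v)
  have Gi: "Gi i = (\<Otimes>t\<in>{..<q}. F i t)" if "0 < i" "i < q" for i
  proof -
    have "Gi i = (\<Otimes>j\<in>{..<q}. F i (i*j mod q))"
      unfolding Gi_def by (rule finprod_cong') (auto simp: Fc Fmod[symmetric])
    also have "... = (\<Otimes>t\<in>(\<lambda>j. i * j mod q) ` {..<q}. F i t)"
      by (rule finprod_reindex[symmetric]) (use mult_perm[OF hq that] Fc in auto)
    also have "... = (\<Otimes>t\<in>{..<q}. F i t)" using mult_perm[OF hq that] by simp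
    finally show ?thesis .
  qed
  have split: "{..<q} = insert 0 {Suc 0..<q}" using q0 by auto
  have S: "(\<Otimes>j\<in>{..<q}. \<Otimes>i\<in>{..<q}. F i (i*j)) = v [^] q \<otimes> (\<Otimes>i\<in>{Suc 0..<q}. \<Otimes>t\<in>{..<q}. F i t)"
  proof -
    have "(\<Otimes>i\<in>{..<q}. Gi i) = Gi 0 \<otimes> (\<Otimes>i\<in>{Suc 0..<q}. Gi i)"
      unfolding split by (rule finprod_insert) (auto simp: Gi_def Fc intro!: finprod_closed)
    also have "(\<Otimes>i\<in>{Suc 0..<q}. Gi i) = (\<Otimes>i\<in>{Suc 0..<q}. \<Otimes>t\<in>{..<q}. F i t)"
      by (rule finprod_cong') (auto simp: Gi Fc intro!: finprod_closed)
    finally show ?thesis using a G0 by simp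
  qed
  have T: "(\<Otimes>i\<in>{..<q}. \<Otimes>t\<in>{..<q}. F i t) = (\<Otimes>t\<in>{..<q}. F 0 t) \<otimes> (\<Otimes>i\<in>{Suc 0..<q}. \<Otimes>t\<in>{..<q}. F i t)"
    unfolding split by (rule finprod_insert) (auto simp: Fc intro!: finprod_closed)
  have F0: "F 0 t = (\<gamma>^^t) v" for t unfolding F_def by simp
  have R: "(\<Otimes>i\<in>{Suc 0..<q}. \<Otimes>t\<in>{..<q}. F i t) \<in> carrier G" by (auto simp: Fc intro!: finprod_closed)
  have N: "(\<Otimes>t\<in>{..<q}. F 0 t) \<in> carrier G" by (auto simp: Fc intro!: finprod_closed)
  show ?thesis
  proof -
    have e1: "(\<Otimes>j\<in>{..<q}. \<Otimes>i\<in>{..<q}. (\<alpha>^^i) ((\<gamma>^^(i*j)) v)) = (\<Otimes>j\<in>{..<q}. \<Otimes>i\<in>{..<q}. F i (i*j))"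
      unfolding F_def ..
    have e2: "(\<Otimes>i\<in>{..<q}. \<Otimes>t\<in>{..<q}. (\<alpha>^^i) ((\<gamma>^^t) v)) = (\<Otimes>i\<in>{..<q}. \<Otimes>t\<in>{..<q}. F i t)"
      unfolding F_def ..
    have e3: "(\<Otimes>t\<in>{..<q}. (\<gamma>^^t) v) = (\<Otimes>t\<in>{..<q}. F 0 t)"
      unfolding F_def by simp
    show ?thesis unfolding e1 e2 e3 S T using R N v by (simp add: m_assoc m_comm m_lcomm)
  qed
qed

end

context comm_group begin
lemma fixed_N:
  assumes hq: "prime q"
    and ha: "\<alpha> \<in> hom G G" and hg: "\<gamma> \<in> hom G G"
    and comm: "\<And>x. x \<in> carrier G \<Longrightarrow> \<alpha> (\<gamma> x) = \<gamma> (\<alpha> x)"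
    and aq: "\<And>x. x \<in> carrier G \<Longrightarrow> (\<alpha>^^q) x = x"
    and gq: "\<And>x. x \<in> carrier G \<Longrightarrow> (\<gamma>^^q) x = x"
    and v: "v \<in> carrier G"
  shows "\<alpha> ((\<gamma>^^j) (\<Otimes>i\<in>{..<q}. (\<alpha>^^i) ((\<gamma>^^(i*j)) v))) = (\<Otimes>i\<in>{..<q}. (\<alpha>^^i) ((\<gamma>^^(i*j)) v))"
proof -
  define F where "F i = (\<alpha>^^i) ((\<gamma>^^(i*j)) v)" for i
  have Fc: "F i \<in> carrier G" for i
    unfolding F_def using ha hg v by (simp add: funpow_closed)
  have gc: "\<And>x. x \<in> carrier G \<Longrightarrow> \<gamma> x \<in> carrier G" using hg by (simp add: hom_def Pi_def)
  have ac: "\<And>x. x \<in> carrier G \<Longrightarrow> \<alpha> x \<in> carrier G" using ha by (simp add: hom_def Pi_def)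
  have h: "\<alpha> \<circ> (\<gamma>^^j) \<in> hom G G"
    by (rule Group.hom_compose[OF funpow_hom[OF is_group hg] ha])
  have "(\<alpha> \<circ> (\<gamma>^^j)) (finprod G F {..<q}) = (\<Otimes>i\<in>{..<q}. (\<alpha> \<circ> (\<gamma>^^j)) (F i))"
    by (rule hom_finprod[OF h]) (auto simp: Fc)
  also have "... = (\<Otimes>i\<in>{..<q}. F (Suc i))"
  proof (rule finprod_cong')
    show "(\<lambda>i. F (Suc i)) \<in> {..<q} \<rightarrow> carrier G" by (auto simp: Fc)
    fix i
    have "(\<gamma>^^j) ((\<alpha>^^i) ((\<gamma>^^(i*j)) v)) = (\<alpha>^^i) ((\<gamma>^^j) ((\<gamma>^^(i*j)) v))"
      by (rule funpow_comm[of "carrier G", symmetric]) (use comm ac gc v hg in \<open>auto simp: funpow_closed\<close>)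
    also have "(\<gamma>^^j) ((\<gamma>^^(i*j)) v) = (\<gamma>^^(j + i * j)) v"
      by (simp add: funpow_add)
    also have "j + i * j = Suc i * j" by simp
    finally show "(\<alpha> \<circ> (\<gamma>^^j)) (F i) = F (Suc i)" unfolding F_def by simp
  qed simp
  also have "... = finprod G F {..<q}"
  proof (rule cycl_shift[OF Fc])
    have "(\<gamma>^^(q*j)) v = (\<gamma>^^(q*j mod q)) v"
      by (rule funpow_mod[where f=\<gamma> and q=q and S="carrier G" and x=v]) (use gq gc v in auto)
    moreover have "(\<alpha>^^q) ((\<gamma>^^(q*j)) v) = (\<gamma>^^(q*j)) v"
      using aq hg v by (simp add: funpow_closed)
    ultimately show "F q = F 0" unfolding F_def by simp
  qed
  finally show ?thesis unfolding F_def by simp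
qed

end

context comm_group begin
lemma fixed_Nc:
  assumes hg: "\<gamma> \<in> hom G G"
    and gq: "\<And>x. x \<in> carrier G \<Longrightarrow> (\<gamma>^^q) x = x"
    and v: "v \<in> carrier G"
  shows "\<gamma> (\<Otimes>t\<in>{..<q}. (\<gamma>^^t) v) = (\<Otimes>t\<in>{..<q}. (\<gamma>^^t) v)"
proof -
  have Fc: "(\<gamma>^^i) v \<in> carrier G" for i using hg v by (simp add: funpow_closed)
  have "\<gamma> (\<Otimes>t\<in>{..<q}. (\<gamma>^^t) v) = (\<Otimes>t\<in>{..<q}. \<gamma> ((\<gamma>^^t) v))"
    by (rule hom_finprod[OF hg]) (auto simp: Fc)
  also have "... = (\<Otimes>t\<in>{..<q}. (\<gamma>^^(Suc t)) v)" by simp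
  also have "... = (\<Otimes>t\<in>{..<q}. (\<gamma>^^t) v)"
    by (rule cycl_shift[where F="\<lambda>t. (\<gamma>^^t) v"]) (use Fc gq v in auto)
  finally show ?thesis .
qed

end

context comm_group begin
lemma fixed_Tot:
  assumes ha: "\<alpha> \<in> hom G G" and hg: "\<gamma> \<in> hom G G"
    and comm: "\<And>x. x \<in> carrier G \<Longrightarrow> \<alpha> (\<gamma> x) = \<gamma> (\<alpha> x)"
    and gq: "\<And>x. x \<in> carrier G \<Longrightarrow> (\<gamma>^^q) x = x"
    and v: "v \<in> carrier G"
  shows "\<gamma> (\<Otimes>i\<in>{..<q}. \<Otimes>t\<in>{..<q}. (\<alpha>^^i) ((\<gamma>^^t) v)) = (\<Otimes>i\<in>{..<q}. \<Otimes>t\<in>{..<q}. (\<alpha>^^i) ((\<gamma>^^t) v))"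
proof -
  have Fc: "(\<alpha>^^i) ((\<gamma>^^t) v) \<in> carrier G" for i t using ha hg v by (simp add: funpow_closed)
  have Fc2: "(\<alpha>^^i) (\<gamma> ((\<gamma>^^t) v)) \<in> carrier G" for i t using Fc[of i "Suc t"] by simp
  have gc: "\<And>x. x \<in> carrier G \<Longrightarrow> \<gamma> x \<in> carrier G" using hg by (simp add: hom_def Pi_def)
  have ac: "\<And>x. x \<in> carrier G \<Longrightarrow> \<alpha> x \<in> carrier G" using ha by (simp add: hom_def Pi_def)
  have "\<gamma> (\<Otimes>i\<in>{..<q}. \<Otimes>t\<in>{..<q}. (\<alpha>^^i) ((\<gamma>^^t) v)) = (\<Otimes>i\<in>{..<q}. \<gamma> (\<Otimes>t\<in>{..<q}. (\<alpha>^^i) ((\<gamma>^^t) v)))"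
    by (rule hom_finprod[OF hg]) (auto simp: Fc intro!: finprod_closed)
  also have "... = (\<Otimes>i\<in>{..<q}. \<Otimes>t\<in>{..<q}. (\<alpha>^^i) ((\<gamma>^^t) v))"
  proof (rule finprod_cong')
    show "(\<lambda>i. \<Otimes>t\<in>{..<q}. (\<alpha>^^i) ((\<gamma>^^t) v)) \<in> {..<q} \<rightarrow> carrier G"
      by (auto simp: Fc intro!: finprod_closed)
    fix i
    have "\<gamma> (\<Otimes>t\<in>{..<q}. (\<alpha>^^i) ((\<gamma>^^t) v)) = (\<Otimes>t\<in>{..<q}. \<gamma> ((\<alpha>^^i) ((\<gamma>^^t) v)))"
      by (rule hom_finprod[OF hg]) (auto simp: Fc)
    also have "... = (\<Otimes>t\<in>{..<q}. (\<alpha>^^i) ((\<gamma>^^(Suc t)) v))"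
    proof (rule finprod_cong')
      fix t
      have "(\<gamma>^^1) ((\<alpha>^^i) ((\<gamma>^^t) v)) = (\<alpha>^^i) ((\<gamma>^^1) ((\<gamma>^^t) v))"
        by (rule funpow_comm[of "carrier G", symmetric]) (use comm ac gc v hg in \<open>auto simp: funpow_closed\<close>)
      then show "\<gamma> ((\<alpha>^^i) ((\<gamma>^^t) v)) = (\<alpha>^^i) ((\<gamma>^^(Suc t)) v)" by simp
    qed (auto simp: Fc Fc2)
    also have "... = (\<Otimes>t\<in>{..<q}. (\<alpha>^^i) ((\<gamma>^^t) v))"
      by (rule cycl_shift[where F="\<lambda>t. (\<alpha>^^i) ((\<gamma>^^t) v)"]) (use Fc gq v in auto)
    finally show "\<gamma> (\<Otimes>t\<in>{..<q}. (\<alpha>^^i) ((\<gamma>^^t) v)) = (\<Otimes>t\<in>{..<q}. (\<alpha>^^i) ((\<gamma>^^t) v))" .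
  qed simp
  finally show ?thesis .
qed

end

lemma coprime_inverse:
  fixes n q :: nat assumes "coprime n q"
  shows "\<exists>u. [q * u = 1] (mod n)"
proof -
  obtain x where "[q * x = gcd q n] (mod n)" using cong_solve_nat by blast
  moreover have "gcd q n = 1" using assms by (simp add: coprime_commute)
  ultimately show ?thesis by auto
qed

context group begin

lemma subgroup_pow_closed:
  assumes "subgroup W G" "y \<in> W"
  shows "y [^] (n::nat) \<in> W"
  by (induction n) (use assms in \<open>auto intro: subgroup.m_closed subgroup.one_closed\<close>)

lemma pow_mod_ord:
  fixes n :: nat
  assumes "x \<in> carrier G" "x [^] n = \<one>"
  shows "x [^] (k::nat) = x [^] (k mod n)"
proof -
  have "k = n * (k div n) + k mod n" by simp
  then have "x [^] k = x [^] (n * (k div n)) \<otimes> x [^] (k mod n)"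
    by (metis assms(1) nat_pow_mult)
  also have "x [^] (n * (k div n)) = \<one>"
    using assms by (simp add: nat_pow_pow[symmetric])
  finally show ?thesis using assms by simp
qed

lemma pow_inverse_eq:
  fixes n q u :: nat
  assumes "x \<in> carrier G" "x [^] n = \<one>" "[q * u = 1] (mod n)"
  shows "x [^] (q * u) = x"
proof -
  have "x [^] (q * u) = x [^] ((q * u) mod n)" by (rule pow_mod_ord[OF assms(1,2)])
  also have "(q * u) mod n = 1 mod n" using assms(3) by (simp add: cong_def)
  also have "x [^] (1 mod n) = x [^] (1::nat)" by (rule pow_mod_ord[OF assms(1,2), symmetric])
  finally show ?thesis using assms(1) by simp
qed

lemma pow_root_in_subgroup:
  fixes n q :: nat
  assumes "subgroup W G" "x \<in> carrier G" "x [^] n = \<one>" "coprime n q" "x [^] (q::nat) \<in> W"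
  shows "x \<in> W"
proof -
  obtain u where u: "[q * u = 1] (mod n)" using coprime_inverse[OF assms(4)] by blast
  have "(x [^] q) [^] u \<in> W" by (rule subgroup_pow_closed[OF assms(1,5)])
  then show ?thesis using pow_inverse_eq[OF assms(2,3) u] assms(2) by (simp add: nat_pow_pow)
qed

end

context comm_group begin

lemma finprod_subgroup:
  assumes "subgroup W G" "f \<in> I \<rightarrow> W"
  shows "finprod G f I \<in> W"
proof (cases "finite I")
  case False then show ?thesis using assms by (simp add: subgroup.one_closed)
next
  case True
  have sub: "W \<subseteq> carrier G" using assms(1) by (rule subgroup.subset)
  from True assms(2) show ?thesis
  proof (induction I rule: finite_induct)
    case empty then show ?case using assms(1) by (simp add: subgroup.one_closed)
  next
    case (insert a I)
    then have "finprod G f (insert a I) = f a \<otimes> finprod G f I"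
      using sub by (intro finprod_insert) auto
    then show ?case using insert assms(1) by (auto intro: subgroup.m_closed)
  qed
qed

lemma decomp:
  assumes hq: "prime q"
    and ha: "\<alpha> \<in> hom G G" and hg: "\<gamma> \<in> hom G G"
    and comm: "\<And>x. x \<in> carrier G \<Longrightarrow> \<alpha> (\<gamma> x) = \<gamma> (\<alpha> x)"
    and aq: "\<And>x. x \<in> carrier G \<Longrightarrow> (\<alpha>^^q) x = x"
    and gq: "\<And>x. x \<in> carrier G \<Longrightarrow> (\<gamma>^^q) x = x"
    and W: "subgroup W G"
    and ordn: "\<And>x. x \<in> carrier G \<Longrightarrow> x [^] n = \<one>" and cop: "coprime n q"
    and FA: "\<And>j w. j < q \<Longrightarrow> w \<in> carrier G \<Longrightarrow> \<alpha> ((\<gamma>^^j) w) = w \<Longrightarrow> w \<in> W"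
    and FC: "\<And>w. w \<in> carrier G \<Longrightarrow> \<gamma> w = w \<Longrightarrow> w \<in> W"
    and v: "v \<in> carrier G"
  shows "v \<in> W"
proof -
  define Nj where "Nj j = (\<Otimes>i\<in>{..<q}. (\<alpha>^^i) ((\<gamma>^^(i*j)) v))" for j
  define Nc where "Nc = (\<Otimes>t\<in>{..<q}. (\<gamma>^^t) v)"
  define Tot where "Tot = (\<Otimes>i\<in>{..<q}. \<Otimes>t\<in>{..<q}. (\<alpha>^^i) ((\<gamma>^^t) v))"
  have Fc: "(\<alpha>^^i) ((\<gamma>^^t) v) \<in> carrier G" for i t using ha hg v by (simp add: funpow_closed)
  have Njc: "Nj j \<in> carrier G" for j unfolding Nj_def by (auto intro!: finprod_closed simp: Fc)
  have Ncc: "Nc \<in> carrier G" unfolding Nc_def using hg v by (auto intro!: finprod_closed simp: funpow_closed)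
  have Totc: "Tot \<in> carrier G" unfolding Tot_def by (auto intro!: finprod_closed simp: Fc)
  have NjW: "Nj j \<in> W" if "j < q" for j
    by (rule FA[OF that Njc]) (unfold Nj_def, rule fixed_N[OF hq ha hg comm aq gq v])
  have NcW: "Nc \<in> W" by (rule FC[OF Ncc]) (unfold Nc_def, rule fixed_Nc[OF hg gq v])
  have TotW: "Tot \<in> W" by (rule FC[OF Totc]) (unfold Tot_def, rule fixed_Tot[OF ha hg comm gq v])
  have PW: "(\<Otimes>j\<in>{..<q}. Nj j) \<in> W" by (rule finprod_subgroup[OF W]) (use NjW in auto)
  have eq: "v [^] q \<otimes> Tot = (\<Otimes>j\<in>{..<q}. Nj j) \<otimes> Nc"
    unfolding Nj_def Nc_def Tot_def by (rule main_identity[OF hq ha hg comm aq gq v])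
  have X: "v [^] q \<otimes> Tot \<in> W" unfolding eq by (intro subgroup.m_closed[OF W] PW NcW)
  have e: "v [^] q = (v [^] q \<otimes> Tot) \<otimes> inv Tot" using v Totc by (simp add: m_assoc)
  have "(v [^] q \<otimes> Tot) \<otimes> inv Tot \<in> W"
    by (rule subgroup.m_closed[OF W X subgroup.m_inv_closed[OF W TotW]])
  then have "v [^] q \<in> W" by (metis e)
  then show ?thesis by (rule pow_root_in_subgroup[OF W v ordn[OF v] cop])
qed

lemma finprod_lessThan_Suc_shift:
  assumes "\<And>i. F i \<in> carrier G"
  shows "(\<Otimes>t\<in>{..<Suc j}. F t) = F 0 \<otimes> (\<Otimes>t\<in>{..<j}. F (Suc t))"
proof -
  have "{..<Suc j} = insert 0 (Suc ` {..<j})" by (auto simp: image_iff less_Suc_eq_0_disj)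
  then have "(\<Otimes>t\<in>{..<Suc j}. F t) = F 0 \<otimes> (\<Otimes>t\<in>Suc ` {..<j}. F t)"
    using assms by (simp add: Pi_def)
  also have "(\<Otimes>t\<in>Suc ` {..<j}. F t) = (\<Otimes>t\<in>{..<j}. F (Suc t))"
    by (rule finprod_reindex) (use assms in auto)
  finally show ?thesis .
qed

lemma coboundary:
  assumes hf: "f \<in> hom G G"
    and ordn: "\<And>x. x \<in> carrier G \<Longrightarrow> x [^] n = \<one>" and cop: "coprime n q"
    and m: "m \<in> carrier G" and norm: "(\<Otimes>t\<in>{..<q}. (f^^t) m) = \<one>"
  shows "\<exists>z\<in>carrier G. m \<otimes> f z = z"
proof -
  interpret gh: group_hom G G f
    using hf by (simp add: group_hom_def group_hom_axioms_def is_group)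
  have fc: "\<And>x. x \<in> carrier G \<Longrightarrow> f x \<in> carrier G" using hf by (auto simp: hom_def Pi_def)
  have Fc: "(f^^t) m \<in> carrier G" for t using hf m by (simp add: funpow_closed)
  define X where "X j = (\<Otimes>t\<in>{..<j}. (f^^t) m)" for j
  have Xc: "X j \<in> carrier G" for j unfolding X_def by (auto intro!: finprod_closed simp: Fc)
  have X1: "X (Suc j) = X j \<otimes> (f^^j) m" for j
  proof -
    have "X (Suc j) = (f^^j) m \<otimes> X j"
      unfolding X_def lessThan_Suc by (rule finprod_insert) (auto simp: Fc)
    then show ?thesis using Xc Fc by (simp add: m_comm)
  qed
  have X2: "X (Suc j) = m \<otimes> f (X j)" for j
  proof -
    have "X (Suc j) = (f^^0) m \<otimes> (\<Otimes>t\<in>{..<j}. (f^^(Suc t)) m)"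
      unfolding X_def by (rule finprod_lessThan_Suc_shift) (simp add: Fc)
    moreover have "f (X j) = (\<Otimes>t\<in>{..<j}. f ((f^^t) m))"
      unfolding X_def by (rule hom_finprod[OF hf]) (auto simp: Fc)
    ultimately show ?thesis by simp
  qed
  define Pi where "Pi = (\<Otimes>j\<in>{..<q}. X j)"
  have Pic: "Pi \<in> carrier G" unfolding Pi_def by (auto intro!: finprod_closed simp: Xc)
  have "(\<Otimes>j\<in>{..<q}. X (Suc j)) = (\<Otimes>j\<in>{..<q}. X j \<otimes> (f^^j) m)"
    by (rule finprod_cong') (auto simp: X1 Xc Fc)
  also have "... = Pi \<otimes> (\<Otimes>j\<in>{..<q}. (f^^j) m)"
    unfolding Pi_def by (rule finprod_multf) (auto simp: Xc Fc)
  also have "... = Pi" using norm Pic by simp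
  finally have e1: "(\<Otimes>j\<in>{..<q}. X (Suc j)) = Pi" .
  have "(\<Otimes>j\<in>{..<q}. X (Suc j)) = (\<Otimes>j\<in>{..<q}. m \<otimes> f (X j))"
    by (rule finprod_cong') (auto simp: X2 Xc fc m)
  also have "... = (\<Otimes>j\<in>{..<q}. m) \<otimes> (\<Otimes>j\<in>{..<q}. f (X j))"
    by (rule finprod_multf) (auto simp: Xc fc m)
  also have "(\<Otimes>j\<in>{..<q}. f (X j)) = f Pi"
    unfolding Pi_def by (rule hom_finprod[OF hf, symmetric]) (auto simp: Xc)
  also have "(\<Otimes>j\<in>{..<q}. m) = m [^] q" using m by (simp add: finprod_const)
  finally have e2: "Pi = m [^] q \<otimes> f Pi" using e1 by simp
  obtain u where u: "[q * u = 1] (mod n)" using coprime_inverse[OF cop] by blast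
  define z where "z = Pi [^] u"
  have zc: "z \<in> carrier G" unfolding z_def using Pic by simp
  have "z = (m [^] q \<otimes> f Pi) [^] u" unfolding z_def using e2 by simp
  also have "... = (m [^] q) [^] u \<otimes> (f Pi) [^] u"
    by (rule pow_mult_distrib) (use m Pic fc in \<open>auto simp: m_comm\<close>)
  also have "(m [^] q) [^] u = m" using pow_inverse_eq[OF m ordn[OF m] u] m by (simp add: nat_pow_pow)
  also have "(f Pi) [^] u = f z" unfolding z_def using Pic by (simp add: gh.hom_nat_pow)
  finally have zz: "z = m \<otimes> f z" .
  show ?thesis using zc zz[symmetric] by blast
qed

end

lemma fermat_s:
  fixes q s :: nat
  assumes "prime q" "s < q"
  shows "s ^ q mod q = s"
proof (cases "s = 0")
  case True
  have "0 < q" using prime_gt_0_nat[OF assms(1)] .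
  then show ?thesis using True by (simp add: power_0_left)
next
  case False
  have q0: "0 < q" using assms prime_gt_0_nat by blast
  have "\<not> q dvd s" using False assms(2) by (auto dest: dvd_imp_le)
  then have "[s ^ (q - 1) = 1] (mod q)" using fermat_theorem assms(1) by blast
  then have "[s * s ^ (q - 1) = s * 1] (mod q)" by (rule cong_scalar_left)
  moreover have "s * s ^ (q - 1) = s ^ q" using q0 by (cases q) auto
  ultimately show ?thesis using assms(2) by (simp add: cong_def)
qed

lemma (in group) rcos_eq_iff':
  assumes "subgroup N G" "x \<in> carrier G" "y \<in> carrier G"
  shows "(N #> x = N #> y) = (x \<otimes> inv y \<in> N)"
proof
  assume e: "N #> x = N #> y"
  have "x \<in> N #> y" using rcos_self[OF assms(2,1)] e by simp
  then show "x \<otimes> inv y \<in> N" using subgroup.rcos_module_imp[OF assms(1) is_group assms(3)] by blast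
next
  assume "x \<otimes> inv y \<in> N"
  then have "x \<in> N #> y" using subgroup.rcos_module_rev[OF assms(1) is_group assms(3,2)] by blast
  then show "N #> x = N #> y" using repr_independence[OF _ assms(3,1)] by simp
qed

locale Agp = group A for A :: "('a, 'c) monoid_scheme" (structure) +
  fixes q :: nat and B :: "'a set"
  assumes qp: "prime q" and ordA: "order A = q ^ 3"
    and expA: "\<forall>a \<in> carrier A. a [^] q = \<one>"
    and Bsub: "subgroup B A" and Bcen: "B \<subseteq> group_center A" and cardB: "card B = q"
begin

lemma r_inv_assoc [simp]: "g \<in> carrier A \<Longrightarrow> y \<in> carrier A \<Longrightarrow> g \<otimes> (inv g \<otimes> y) = y"
  by (simp add: m_assoc[symmetric])
lemma l_inv_assoc [simp]: "g \<in> carrier A \<Longrightarrow> y \<in> carrier A \<Longrightarrow> inv g \<otimes> (g \<otimes> y) = y"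
  by (simp add: m_assoc[symmetric])

lemma q2: "2 \<le> q" using qp prime_ge_2_nat by blast
lemma q0: "0 < q" using q2 by simp
lemma finA: "finite (carrier A)"
proof -
  have "0 < order A" using ordA q0 by simp
  then show ?thesis by (simp add: order_gt_0_iff_finite)
qed
lemma cardA: "card (carrier A) = q ^ 3" using ordA by (simp add: order_def)
lemma Bc: "\<beta> \<in> B \<Longrightarrow> \<beta> \<in> carrier A" using subgroup.subset[OF Bsub] by blast
lemma cen: "\<beta> \<in> B \<Longrightarrow> x \<in> carrier A \<Longrightarrow> \<beta> \<otimes> x = x \<otimes> \<beta>"
  using Bcen by (auto simp: group_center_def)
lemma xq: "x \<in> carrier A \<Longrightarrow> x [^] q = \<one>" using expA by blast
lemma powmod: "x \<in> carrier A \<Longrightarrow> x [^] (k::nat) = x [^] (k mod q)"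
  using pow_mod_ord xq by blast
lemma B_one: "\<one> \<in> B" by (rule subgroup.one_closed[OF Bsub])
lemma B_mult: "x \<in> B \<Longrightarrow> y \<in> B \<Longrightarrow> x \<otimes> y \<in> B" by (rule subgroup.m_closed[OF Bsub])
lemma B_inv: "x \<in> B \<Longrightarrow> inv x \<in> B" by (rule subgroup.m_inv_closed[OF Bsub])
lemma B_pow: "x \<in> B \<Longrightarrow> x [^] (n::nat) \<in> B" by (rule subgroup_pow_closed[OF Bsub])

lemma root:
  assumes S: "subgroup S A" and x: "x \<in> carrier A" and e: "x [^] (e::nat) \<in> S" "0 < e" "e < q"
  shows "x \<in> S"
proof -
  have "\<not> q dvd e" using e by (auto dest: dvd_imp_le)
  then have "coprime q e" using qp by (simp add: prime_imp_coprime)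
  then show ?thesis using pow_root_in_subgroup[OF S x xq[OF x]] e(1) by blast
qed

lemma exists_notin:
  assumes "S \<subseteq> carrier A" "card S < q ^ 3"
  shows "\<exists>x \<in> carrier A. x \<notin> S"
proof (rule ccontr)
  assume "\<not> ?thesis"
  then have "carrier A \<subseteq> S" by blast
  then have "card (carrier A) \<le> card S" using assms(1) finA by (metis card_mono finite_subset)
  then show False using assms(2) cardA by simp
qed

definition Dset where "Dset a = (\<lambda>(i, \<beta>). a [^] (i::nat) \<otimes> \<beta>) ` ({..<q} \<times> B)"

lemma Dset_mem: "i < q \<Longrightarrow> \<beta> \<in> B \<Longrightarrow> a [^] i \<otimes> \<beta> \<in> Dset a"
  unfolding Dset_def by force

lemma Dset_E: "x \<in> Dset a \<Longrightarrow> (\<And>i \<beta>. i < q \<Longrightarrow> \<beta> \<in> B \<Longrightarrow> x = a [^] i \<otimes> \<beta> \<Longrightarrow> P) \<Longrightarrow> P"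
  unfolding Dset_def by auto

lemma Dset_sub:
  assumes a: "a \<in> carrier A"
  shows "subgroup (Dset a) A"
proof (rule subgroupI)
  show "Dset a \<subseteq> carrier A" using a Bc unfolding Dset_def by auto
  have "a [^] (0::nat) \<otimes> \<one> \<in> Dset a" by (rule Dset_mem[OF q0 B_one])
  then show "Dset a \<noteq> {}" by blast
  show "inv x \<in> Dset a" if x: "x \<in> Dset a" for x
  proof -
    obtain i \<beta> where ib: "i < q" "\<beta> \<in> B" "x = a [^] i \<otimes> \<beta>" using x by (rule Dset_E)
    have \<beta>c: "\<beta> \<in> carrier A" using ib Bc by blast
    have ib': "inv \<beta> \<in> B" using ib B_inv by blast
    have "(a [^] (q - i) \<otimes> inv \<beta>) \<otimes> x = a [^] (q - i) \<otimes> (inv \<beta> \<otimes> a [^] i) \<otimes> \<beta>"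
      using ib a \<beta>c by (simp add: m_assoc)
    also have "inv \<beta> \<otimes> a [^] i = a [^] i \<otimes> inv \<beta>" using cen[OF ib'] a by simp
    also have "a [^] (q - i) \<otimes> (a [^] i \<otimes> inv \<beta>) \<otimes> \<beta> = a [^] (q - i + i)"
      using a \<beta>c by (simp add: m_assoc nat_pow_mult)
    also have "q - i + i = q" using ib by simp
    finally have e: "(a [^] (q - i) \<otimes> inv \<beta>) \<otimes> x = \<one>" using xq[OF a] by simp
    have xc: "x \<in> carrier A" using ib a \<beta>c by simp
    have "inv x = a [^] (q - i) \<otimes> inv \<beta>" by (rule inv_equality[OF e xc]) (use a \<beta>c in simp)
    also have "... = a [^] ((q - i) mod q) \<otimes> inv \<beta>" using powmod[OF a] by simp
    finally show ?thesis using Dset_mem[of "(q - i) mod q" "inv \<beta>" a] ib' q0 by simp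
  qed
  show "x \<otimes> y \<in> Dset a" if x: "x \<in> Dset a" and y: "y \<in> Dset a" for x y
  proof -
    obtain i \<beta> where ib: "i < q" "\<beta> \<in> B" "x = a [^] i \<otimes> \<beta>" using x by (rule Dset_E)
    obtain j \<gamma> where jg: "j < q" "\<gamma> \<in> B" "y = a [^] j \<otimes> \<gamma>" using y by (rule Dset_E)
    have c: "\<beta> \<in> carrier A" "\<gamma> \<in> carrier A" using ib jg Bc by auto
    have "x \<otimes> y = a [^] i \<otimes> (\<beta> \<otimes> a [^] j) \<otimes> \<gamma>" using ib jg a c by (simp add: m_assoc)
    also have "\<beta> \<otimes> a [^] j = a [^] j \<otimes> \<beta>" using cen[OF ib(2)] a by simp
    also have "a [^] i \<otimes> (a [^] j \<otimes> \<beta>) \<otimes> \<gamma> = a [^] (i + j) \<otimes> (\<beta> \<otimes> \<gamma>)"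
      using a c by (simp add: m_assoc nat_pow_mult[symmetric])
    also have "... = a [^] ((i + j) mod q) \<otimes> (\<beta> \<otimes> \<gamma>)" using powmod[OF a] by simp
    finally show ?thesis using Dset_mem[OF _ B_mult[OF ib(2) jg(2)]] q0 by simp
  qed
qed

lemma pow_diff_B:
  assumes a: "a \<in> carrier A" "a \<notin> B" and ij: "j < i" "i < q" and b: "\<beta> \<in> B" "\<gamma> \<in> B"
    and e: "a [^] i \<otimes> \<beta> = a [^] j \<otimes> \<gamma>"
  shows False
proof -
  have c: "\<beta> \<in> carrier A" "\<gamma> \<in> carrier A" using b Bc by auto
  have "a [^] j \<otimes> (a [^] (i - j) \<otimes> \<beta>) = a [^] j \<otimes> \<gamma>"
    using e a c ij by (simp add: m_assoc[symmetric] nat_pow_mult)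
  then have "a [^] (i - j) \<otimes> \<beta> = \<gamma>" using a c by simp
  moreover have "a [^] (i - j) = (a [^] (i - j) \<otimes> \<beta>) \<otimes> inv \<beta>" using a c by (simp add: m_assoc)
  ultimately have "a [^] (i - j) = \<gamma> \<otimes> inv \<beta>" by simp
  then have "a [^] (i - j) \<in> B" using B_mult B_inv b by simp
  then have "a \<in> B" using root[OF Bsub a(1)] ij by simp
  then show False using a by simp
qed

lemma Dset_card:
  assumes a: "a \<in> carrier A" "a \<notin> B"
  shows "card (Dset a) = q * q"
proof -
  have inj: "inj_on (\<lambda>(i, \<beta>). a [^] (i::nat) \<otimes> \<beta>) ({..<q} \<times> B)"
  proof (rule inj_onI)
    fix x y assume x: "x \<in> {..<q} \<times> B" and y: "y \<in> {..<q} \<times> B"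
      and e0: "(\<lambda>(i, \<beta>). a [^] (i::nat) \<otimes> \<beta>) x = (\<lambda>(i, \<beta>). a [^] (i::nat) \<otimes> \<beta>) y"
    obtain i \<beta> where xi: "x = (i, \<beta>)" "i < q" "\<beta> \<in> B" using x by auto
    obtain j \<gamma> where yj: "y = (j, \<gamma>)" "j < q" "\<gamma> \<in> B" using y by auto
    have e: "a [^] i \<otimes> \<beta> = a [^] j \<otimes> \<gamma>" using e0 xi yj by simp
    have ij: "i = j"
    proof (rule linorder_cases[of i j])
      assume "i < j" then show ?thesis using pow_diff_B[OF a _ yj(2) yj(3) xi(3) e[symmetric]] by simp
    next
      assume "j < i" then show ?thesis using pow_diff_B[OF a _ xi(2) xi(3) yj(3) e] by simp
    qed simp
    have "\<beta> = \<gamma>" using e ij a Bc xi yj by simp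
    then show "x = y" using xi yj ij by simp
  qed
  have "card (Dset a) = card ({..<q} \<times> B)" unfolding Dset_def by (rule card_image[OF inj])
  also have "... = q * q" using cardB by (simp add: card_cartesian_product)
  finally show ?thesis .
qed

lemma conj_pow: "c \<in> carrier A \<Longrightarrow> a \<in> carrier A \<Longrightarrow> (c \<otimes> a \<otimes> inv c) [^] (n::nat) = c \<otimes> a [^] n \<otimes> inv c"
proof (induction n)
  case 0 then show ?case by simp
next
  case (Suc n)
  have "(c \<otimes> a \<otimes> inv c) [^] Suc n = (c \<otimes> a [^] n \<otimes> inv c) \<otimes> (c \<otimes> a \<otimes> inv c)" using Suc by simp
  also have "... = c \<otimes> (a [^] n \<otimes> (inv c \<otimes> (c \<otimes> (a \<otimes> inv c))))" using Suc by (simp add: m_assoc)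
  also have "inv c \<otimes> (c \<otimes> (a \<otimes> inv c)) = a \<otimes> inv c" using Suc by (simp add: m_assoc[symmetric])
  finally show ?case using Suc by (simp add: m_assoc)
qed

lemma c_conj_D:
  assumes a: "a \<in> carrier A" "a \<notin> B" and c: "c \<in> carrier A" "c \<notin> Dset a"
  shows "c \<otimes> a \<otimes> inv c \<in> Dset a"
proof (rule ccontr)
  assume x: "c \<otimes> a \<otimes> inv c \<notin> Dset a"
  let ?D = "Dset a"
  have D: "subgroup ?D A" by (rule Dset_sub[OF a(1)])
  have Dc: "?D \<subseteq> carrier A" using subgroup.subset[OF D] .
  have aD: "a \<in> ?D" using Dset_mem[of 1 \<one> a] q2 B_one a by simp
  have ajD: "a [^] (j::nat) \<in> ?D" for j using subgroup_pow_closed[OF D aD] .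
  have lag: "card (rcosets ?D) * card ?D = order A" by (rule lagrange[OF D])
  then have cr: "card (rcosets ?D) = q" using Dset_card[OF a] ordA q0 by (simp add: power3_eq_cube)
  define g where "g j = c \<otimes> a [^] (j::nat)" for j
  have gc: "g j \<in> carrier A" for j unfolding g_def using a c by simp
  have key: "j = k" if jk: "k \<le> j" "j < q" and e: "?D #> g j = ?D #> g k" for j k
  proof (rule ccontr)
    assume "j \<noteq> k"
    then have d: "0 < j - k" "j - k < q" using jk by auto
    have "g j \<otimes> inv (g k) \<in> ?D" using rcos_eq_iff'[OF D gc gc] e by simp
    moreover have "g j \<otimes> inv (g k) = (c \<otimes> a \<otimes> inv c) [^] (j - k)"
    proof -
      have "a [^] j = a [^] (j - k) \<otimes> a [^] k" using jk a by (simp add: nat_pow_mult)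
      then have "g j \<otimes> inv (g k) = c \<otimes> a [^] (j - k) \<otimes> (a [^] k \<otimes> inv (a [^] k)) \<otimes> inv c"
        unfolding g_def using a c by (simp add: m_assoc inv_mult_group)
      also have "... = c \<otimes> a [^] (j - k) \<otimes> inv c" using a c by simp
      finally show ?thesis using conj_pow[OF c(1) a(1)] by simp
    qed
    ultimately have "(c \<otimes> a \<otimes> inv c) [^] (j - k) \<in> ?D" by simp
    then have "c \<otimes> a \<otimes> inv c \<in> ?D" using root[OF D _ _ d] a c by simp
    then show False using x by simp
  qed
  have inj: "inj_on (\<lambda>j. ?D #> g j) {..<q}"
  proof (rule inj_onI)
    fix j k assume j: "j \<in> {..<q}" and k: "k \<in> {..<q}" and e: "?D #> g j = ?D #> g k"
    show "j = k"
    proof (cases "k \<le> j")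
      case True then show ?thesis using key[OF True _ e] j by simp
    next
      case False then show ?thesis using key[of j k] e k by simp
    qed
  qed
  have notD: "?D #> g j \<noteq> ?D" for j
  proof
    assume e: "?D #> g j = ?D"
    have "g j \<in> ?D" using rcos_self[OF gc[of j] D] e by simp
    then have "g j \<otimes> inv (a [^] j) \<in> ?D"
      using subgroup.m_closed[OF D _ subgroup.m_inv_closed[OF D ajD]] by blast
    moreover have "g j \<otimes> inv (a [^] j) = c" unfolding g_def using a c by (simp add: m_assoc)
    ultimately show False using c by simp
  qed
  have sub: "insert ?D ((\<lambda>j. ?D #> g j) ` {..<q}) \<subseteq> rcosets ?D"
  proof -
    have "?D #> \<one> \<in> rcosets ?D" by (rule rcosetsI[OF Dc]) simp
    then have "?D \<in> rcosets ?D" using coset_mult_one[OF Dc] by simp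
    moreover have "?D #> g j \<in> rcosets ?D" for j by (rule rcosetsI[OF Dc gc])
    ultimately show ?thesis by blast
  qed
  have fin: "finite (rcosets ?D)"
    using finite_subset[OF rcosets_subset_PowG[OF D]] finA by simp
  have "card (insert ?D ((\<lambda>j. ?D #> g j) ` {..<q})) = Suc q"
    using card_image[OF inj] notD by (subst card_insert_disjoint) auto
  then have "Suc q \<le> q" using card_mono[OF fin sub] cr by simp
  then show False by simp
qed

lemma conj_B: "\<beta> \<in> B \<Longrightarrow> c \<in> carrier A \<Longrightarrow> c \<otimes> \<beta> \<otimes> inv c = \<beta>"
proof -
  assume b: "\<beta> \<in> B" and c: "c \<in> carrier A"
  have bc: "\<beta> \<in> carrier A" using b Bc by blast
  have "c \<otimes> \<beta> = \<beta> \<otimes> c" using cen[OF b c] by simp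
  then have "c \<otimes> \<beta> \<otimes> inv c = \<beta> \<otimes> c \<otimes> inv c" by simp
  also have "... = \<beta>" using bc c by (simp add: m_assoc)
  finally show ?thesis .
qed

lemma iter_conj:
  assumes a: "a \<in> carrier A" and c: "c \<in> carrier A" and s: "c \<otimes> a \<otimes> inv c = a [^] (s::nat) \<otimes> \<beta>" "\<beta> \<in> B"
  shows "\<exists>\<gamma>\<in>B. c [^] (k::nat) \<otimes> a \<otimes> inv (c [^] k) = a [^] (s ^ k) \<otimes> \<gamma>"
proof (induction k)
  case 0 then show ?case using a B_one by (intro bexI[of _ \<one>]) auto
next
  case (Suc k)
  then obtain \<gamma> where g: "\<gamma> \<in> B" "c [^] k \<otimes> a \<otimes> inv (c [^] k) = a [^] (s ^ k) \<otimes> \<gamma>" by blast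
  have bc: "\<beta> \<in> carrier A" "\<gamma> \<in> carrier A" using s g Bc by auto
  have cs: "c [^] Suc k = c \<otimes> c [^] k" by (rule nat_pow_Suc2[OF c])
  have "c [^] Suc k \<otimes> a \<otimes> inv (c [^] Suc k) = c \<otimes> (c [^] k \<otimes> a \<otimes> inv (c [^] k)) \<otimes> inv c"
    unfolding cs using a c by (simp add: m_assoc inv_mult_group)
  also have "... = c \<otimes> (a [^] (s ^ k) \<otimes> \<gamma>) \<otimes> inv c" using g by simp
  also have "... = (c \<otimes> a [^] (s ^ k) \<otimes> inv c) \<otimes> (c \<otimes> \<gamma> \<otimes> inv c)"
    using a c bc by (simp add: m_assoc)
  also have "c \<otimes> \<gamma> \<otimes> inv c = \<gamma>" using conj_B g c by blast
  also have "c \<otimes> a [^] (s ^ k) \<otimes> inv c = (a [^] s \<otimes> \<beta>) [^] (s ^ k)"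
    using conj_pow[OF c a, of "s ^ k"] s by simp
  also have "... = (a [^] s) [^] (s ^ k) \<otimes> \<beta> [^] (s ^ k)"
    by (rule pow_mult_distrib) (use cen[OF s(2)] a bc in auto)
  also have "(a [^] s) [^] (s ^ k) = a [^] (s ^ Suc k)" using a by (simp add: nat_pow_pow)
  finally have "c [^] Suc k \<otimes> a \<otimes> inv (c [^] Suc k) = a [^] (s ^ Suc k) \<otimes> (\<beta> [^] (s ^ k) \<otimes> \<gamma>)"
    using a bc by (simp add: m_assoc)
  moreover have "\<beta> [^] (s ^ k) \<otimes> \<gamma> \<in> B" using B_mult[OF B_pow[OF s(2)] g(1)] .
  ultimately show ?case by blast
qed

lemma conj_in_aB:
  assumes a: "a \<in> carrier A" "a \<notin> B" and c: "c \<in> carrier A" "c \<notin> Dset a"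
  shows "\<exists>\<beta>\<in>B. c \<otimes> a \<otimes> inv c = a \<otimes> \<beta>"
proof -
  obtain s \<beta> where sb: "s < q" "\<beta> \<in> B" "c \<otimes> a \<otimes> inv c = a [^] s \<otimes> \<beta>"
    using c_conj_D[OF a c] by (rule Dset_E)
  obtain \<gamma> where g: "\<gamma> \<in> B" "c [^] q \<otimes> a \<otimes> inv (c [^] q) = a [^] (s ^ q) \<otimes> \<gamma>"
    using iter_conj[OF a(1) c(1) sb(3) sb(2)] by blast
  have gc: "\<gamma> \<in> carrier A" using g Bc by blast
  have "a [^] (s ^ q) = a [^] s" using powmod[OF a(1), of "s ^ q"] fermat_s[OF qp sb(1)] by simp
  then have e: "a = a [^] s \<otimes> \<gamma>" using g xq[OF c(1)] a by simp
  have "s = 1"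
  proof (rule ccontr)
    assume s1: "s \<noteq> 1"
    show False
    proof (cases "s = 0")
      case True
      then have "a = \<gamma>" using e gc by simp
      then show False using a g by simp
    next
      case False
      then have s2: "0 < s - 1" "s - 1 < q" using s1 sb(1) by auto
      have "a \<otimes> \<one> = a \<otimes> (a [^] (s - 1) \<otimes> \<gamma>)"
      proof -
        have "a [^] s = a [^] (Suc (s - 1))" using False by simp
        also have "... = a \<otimes> a [^] (s - 1)" by (rule nat_pow_Suc2[OF a(1)])
        finally have "a [^] s = a \<otimes> a [^] (s - 1)" .
        then show ?thesis using e a gc by (simp add: m_assoc)
      qed
      then have "a [^] (s - 1) \<otimes> \<gamma> = \<one>" using a gc by simp
      then have "inv \<gamma> = a [^] (s - 1)" by (intro inv_equality) (use a gc in auto)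
      then have "a [^] (s - 1) = inv \<gamma>" by simp
      then have "a [^] (s - 1) \<in> B" using B_inv g by simp
      then have "a \<in> B" using root[OF Bsub a(1) _ s2] by simp
      then show False using a by simp
    qed
  qed
  then show ?thesis using sb a(1) by auto
qed

lemma pair:
  "\<exists>a c. a \<in> carrier A \<and> c \<in> carrier A \<and> c \<notin> B \<and> (\<forall>j<q. a \<otimes> c [^] j \<notin> B)
     \<and> (\<exists>\<beta>\<in>B. c \<otimes> a = a \<otimes> c \<otimes> \<beta>)"
proof -
  have qq: "2 * 2 \<le> q * q" using mult_le_mono[OF q2 q2] .
  have "q * 1 < q * (q * q)" using q0 qq by (intro mult_strict_left_mono) auto
  then have "card B < q ^ 3" using cardB by (simp add: power3_eq_cube mult.assoc)
  then obtain a where a: "a \<in> carrier A" "a \<notin> B" using exists_notin subgroup.subset[OF Bsub] by blast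
  have D: "subgroup (Dset a) A" by (rule Dset_sub[OF a(1)])
  have "card (Dset a) < q ^ 3" using Dset_card[OF a] q2 by (simp add: power3_eq_cube)
  then obtain c where c: "c \<in> carrier A" "c \<notin> Dset a" using exists_notin subgroup.subset[OF D] by blast
  have BD: "B \<subseteq> Dset a" using Dset_mem[of 0 _ a] q0 Bc by auto
  have cB: "c \<notin> B" using c BD by blast
  have acB: "a \<otimes> c [^] j \<notin> B" if j: "j < q" for j
  proof
    assume ab: "a \<otimes> c [^] j \<in> B"
    show False
    proof (cases "j = 0")
      case True then show False using ab a by simp
    next
      case False
      have aD: "a \<in> Dset a" using Dset_mem[of 1 \<one> a] q2 B_one a by simp
      have "c [^] j = inv a \<otimes> (a \<otimes> c [^] j)" using a c by (simp add: m_assoc[symmetric])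
      also have "... \<in> Dset a" using subgroup.m_closed[OF D subgroup.m_inv_closed[OF D aD]] ab BD by blast
      finally have "c \<in> Dset a" using root[OF D c(1)] False j by simp
      then show False using c by simp
    qed
  qed
  obtain \<beta> where b: "\<beta> \<in> B" "c \<otimes> a \<otimes> inv c = a \<otimes> \<beta>" using conj_in_aB[OF a c] by blast
  have bc: "\<beta> \<in> carrier A" using b Bc by blast
  have "c \<otimes> a = (c \<otimes> a \<otimes> inv c) \<otimes> c" using a c by (simp add: m_assoc)
  also have "... = a \<otimes> (\<beta> \<otimes> c)" using b a bc c by (simp add: m_assoc)
  also have "\<beta> \<otimes> c = c \<otimes> \<beta>" using cen[OF b(1) c(1)] .
  finally have "c \<otimes> a = a \<otimes> c \<otimes> \<beta>" using a c bc by (simp add: m_assoc)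
  then show ?thesis using a c cB acB b by blast
qed

lemma b0: "\<exists>b \<in> B. b \<noteq> \<one>"
proof (rule ccontr)
  assume "\<not> ?thesis"
  then have "B \<subseteq> {\<one>}" by blast
  then have "card B \<le> card {\<one>}" by (intro card_mono) auto
  then have "card B \<le> 1" by simp
  then show False using cardB q2 by simp
qed

end

lemma (in group) subgroup_of_restrict:
  assumes "subgroup P G" "W \<subseteq> P" "\<one> \<in> W"
    "\<And>x y. x \<in> W \<Longrightarrow> y \<in> W \<Longrightarrow> x \<otimes> y \<in> W" "\<And>x. x \<in> W \<Longrightarrow> inv x \<in> W"
  shows "subgroup W (G\<lparr>carrier := P\<rparr>)"
proof -
  have "subgroup W G"
    using assms subgroup.subset[OF assms(1)] by (intro subgroupI) auto
  then show ?thesis using subgroup_incl assms by blast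
qed

locale L = group G for G :: "('g, 'd) monoid_scheme" (structure) +
  fixes A :: "('a, 'c) monoid_scheme" and \<phi> :: "'a \<Rightarrow> 'g \<Rightarrow> 'g"
    and q :: nat and B :: "'a set" and P H :: "'g set"
  assumes qp: "prime q"
    and A: "group A"
    and ordA: "order A = q ^ 3"
    and expA: "\<forall>a \<in> carrier A. a [^]\<^bsub>A\<^esub> q = \<one>\<^bsub>A\<^esub>"
    and Bsub: "subgroup B A" and Bcen: "B \<subseteq> group_center A" and cardB: "card B = q"
    and fin: "finite (carrier G)"
    and act: "group_action A (carrier G) \<phi>"
    and isos: "\<forall>a \<in> carrier A. \<phi> a \<in> iso G G"
    and copG: "coprime (order G) q"
    and Psub: "subgroup P G" and Hsub: "subgroup H G"
    and PA: "\<forall>a \<in> carrier A. \<phi> a ` P = P"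
    and HA: "\<forall>a \<in> carrier A. \<phi> a ` H = H"
    and Pnorm: "P \<lhd> G"
    and nil: "nilpotent_subgroup G H"
    and Pab: "\<forall>x \<in> P. \<forall>y \<in> P. x \<otimes> y = y \<otimes> x"
begin

sublocale Agrp: group A by (rule A)

lemma r_inv_assoc [simp]: "g \<in> carrier G \<Longrightarrow> y \<in> carrier G \<Longrightarrow> g \<otimes> (inv g \<otimes> y) = y"
  by (simp add: m_assoc[symmetric])
lemma l_inv_assoc [simp]: "g \<in> carrier G \<Longrightarrow> y \<in> carrier G \<Longrightarrow> inv g \<otimes> (g \<otimes> y) = y"
  by (simp add: m_assoc[symmetric])

definition cm :: "'g \<Rightarrow> 'g \<Rightarrow> 'g" where "cm x y = inv x \<otimes> inv y \<otimes> x \<otimes> y"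

definition T where "T = generate G (\<Union>a \<in> carrier A - {\<one>\<^bsub>A\<^esub>}.
                 comm_subgroup G (fixed_points \<phi> P {a}) (fixed_points \<phi> H {a}))"

lemma comm_subgroup_cm: "comm_subgroup G S U = generate G ((\<lambda>(x, y). cm x y) ` (S \<times> U))"
  unfolding comm_subgroup_def cm_def ..

lemma Pc: "x \<in> P \<Longrightarrow> x \<in> carrier G" using subgroup.subset[OF Psub] by blast
lemma Hc: "x \<in> H \<Longrightarrow> x \<in> carrier G" using subgroup.subset[OF Hsub] by blast
lemma Bc: "b \<in> B \<Longrightarrow> b \<in> carrier A" using subgroup.subset[OF Bsub] by blast

lemma cm_closed: "x \<in> carrier G \<Longrightarrow> y \<in> carrier G \<Longrightarrow> cm x y \<in> carrier G"
  unfolding cm_def by simp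

lemma phi_hom: "a \<in> carrier A \<Longrightarrow> \<phi> a \<in> hom G G"
  using isos by (simp add: iso_def)

lemma phi_closed: "a \<in> carrier A \<Longrightarrow> x \<in> carrier G \<Longrightarrow> \<phi> a x \<in> carrier G"
  using phi_hom by (auto simp: hom_def Pi_def)

lemma phi_mult: "a \<in> carrier A \<Longrightarrow> x \<in> carrier G \<Longrightarrow> y \<in> carrier G \<Longrightarrow> \<phi> a (x \<otimes> y) = \<phi> a x \<otimes> \<phi> a y"
  using phi_hom by (auto simp: hom_def)

lemma phi_gh: "a \<in> carrier A \<Longrightarrow> group_hom G G (\<phi> a)"
  using phi_hom by (simp add: group_hom_def group_hom_axioms_def is_group)

lemma phi_inv: "a \<in> carrier A \<Longrightarrow> x \<in> carrier G \<Longrightarrow> \<phi> a (inv x) = inv (\<phi> a x)"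
  using group_hom.hom_inv[OF phi_gh] by blast

lemma phi_one: "a \<in> carrier A \<Longrightarrow> \<phi> a \<one> = \<one>"
  using group_hom.hom_one[OF phi_gh] by blast

lemma phi_cm: "a \<in> carrier A \<Longrightarrow> x \<in> carrier G \<Longrightarrow> y \<in> carrier G \<Longrightarrow> \<phi> a (cm x y) = cm (\<phi> a x) (\<phi> a y)"
  unfolding cm_def by (simp add: phi_mult phi_inv phi_closed)

lemma phi_comp: "a \<in> carrier A \<Longrightarrow> b \<in> carrier A \<Longrightarrow> x \<in> carrier G \<Longrightarrow> \<phi> (a \<otimes>\<^bsub>A\<^esub> b) x = \<phi> a (\<phi> b x)"
  using group_action.composition_rule[OF act] by blast

lemma phi_unit: "x \<in> carrier G \<Longrightarrow> \<phi> \<one>\<^bsub>A\<^esub> x = x"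
  using fun_cong[OF group_action.id_eq_one[OF act], of x] by simp

lemma phi_pow: "a \<in> carrier A \<Longrightarrow> x \<in> carrier G \<Longrightarrow> (\<phi> a ^^ k) x = \<phi> (a [^]\<^bsub>A\<^esub> k) x"
proof (induction k)
  case 0 then show ?case by (simp add: phi_unit)
next
  case (Suc k)
  have "(\<phi> a ^^ Suc k) x = \<phi> a (\<phi> (a [^]\<^bsub>A\<^esub> k) x)" using Suc by simp
  also have "... = \<phi> (a \<otimes>\<^bsub>A\<^esub> a [^]\<^bsub>A\<^esub> k) x"
    using Suc by (simp add: phi_comp monoid.nat_pow_closed[OF group.is_monoid[OF A]])
  also have "a \<otimes>\<^bsub>A\<^esub> a [^]\<^bsub>A\<^esub> k = a [^]\<^bsub>A\<^esub> Suc k"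
    using Suc.prems(1) by (rule Agrp.nat_pow_Suc2[symmetric])
  finally show ?case .
qed

lemma phi_q: "a \<in> carrier A \<Longrightarrow> x \<in> carrier G \<Longrightarrow> (\<phi> a ^^ q) x = x"
  using expA by (simp add: phi_pow phi_unit)

lemma phi_comm: "a \<in> carrier A \<Longrightarrow> b \<in> carrier A \<Longrightarrow> a \<otimes>\<^bsub>A\<^esub> b = b \<otimes>\<^bsub>A\<^esub> a \<Longrightarrow> x \<in> carrier G
   \<Longrightarrow> \<phi> a (\<phi> b x) = \<phi> b (\<phi> a x)"
  by (metis phi_comp)

lemma B_central: "b \<in> B \<Longrightarrow> a \<in> carrier A \<Longrightarrow> b \<otimes>\<^bsub>A\<^esub> a = a \<otimes>\<^bsub>A\<^esub> b"
  using Bcen by (auto simp: group_center_def)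

lemma phi_P: "a \<in> carrier A \<Longrightarrow> x \<in> P \<Longrightarrow> \<phi> a x \<in> P" using PA by blast
lemma phi_H: "a \<in> carrier A \<Longrightarrow> x \<in> H \<Longrightarrow> \<phi> a x \<in> H" using HA by blast

lemma gen_set_sub: "(\<Union>a \<in> carrier A - {\<one>\<^bsub>A\<^esub>}.
                 comm_subgroup G (fixed_points \<phi> P {a}) (fixed_points \<phi> H {a})) \<subseteq> carrier G"
proof -
  have "comm_subgroup G (fixed_points \<phi> P {a}) (fixed_points \<phi> H {a}) \<subseteq> carrier G" for a
    unfolding comm_subgroup_cm
    by (rule generate_incl) (auto simp: fixed_points_def cm_closed Pc Hc)
  then show ?thesis by blast
qed

lemma T_subgroup: "subgroup T G"
  unfolding T_def by (rule generate_is_subgroup[OF gen_set_sub])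

lemma T_gen:
  assumes "a \<in> carrier A" "a \<noteq> \<one>\<^bsub>A\<^esub>" "x \<in> P" "\<phi> a x = x" "h \<in> H" "\<phi> a h = h"
  shows "cm x h \<in> T"
proof -
  have "cm x h \<in> comm_subgroup G (fixed_points \<phi> P {a}) (fixed_points \<phi> H {a})"
    unfolding comm_subgroup_cm
    by (rule generate.incl) (use assms in \<open>auto simp: fixed_points_def\<close>)
  then have "cm x h \<in> (\<Union>a \<in> carrier A - {\<one>\<^bsub>A\<^esub>}.
                 comm_subgroup G (fixed_points \<phi> P {a}) (fixed_points \<phi> H {a}))"
    using assms by blast
  then show ?thesis unfolding T_def by (rule generate.incl)
qed

lemma P_conj: "x \<in> P \<Longrightarrow> g \<in> carrier G \<Longrightarrow> inv g \<otimes> x \<otimes> g \<in> P"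
  using normal_invE(2)[OF Pnorm, of "inv g" x] by simp

lemma cm_P: "x \<in> P \<Longrightarrow> g \<in> carrier G \<Longrightarrow> cm x g \<in> P"
proof -
  assume x: "x \<in> P" and g: "g \<in> carrier G"
  have "cm x g = inv x \<otimes> (inv g \<otimes> x \<otimes> g)" unfolding cm_def using x g by (simp add: Pc m_assoc)
  then show ?thesis using x g P_conj subgroup.m_closed[OF Psub] subgroup.m_inv_closed[OF Psub] by simp
qed

lemma cm_mult:
  assumes x: "x \<in> P" and y: "y \<in> P" and g: "g \<in> carrier G"
  shows "cm (x \<otimes> y) g = cm x g \<otimes> cm y g"
proof -
  define c where "c z = inv g \<otimes> z \<otimes> g" for z
  have cP: "z \<in> P \<Longrightarrow> c z \<in> P" for z unfolding c_def using P_conj g by blast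
  have cm_eq: "z \<in> P \<Longrightarrow> cm z g = inv z \<otimes> c z" for z unfolding cm_def c_def using g by (simp add: Pc m_assoc)
  have cxy: "c (x \<otimes> y) = c x \<otimes> c y" unfolding c_def using x y g by (simp add: Pc m_assoc)
  have xyP: "x \<otimes> y \<in> P" using x y subgroup.m_closed[OF Psub] by blast
  have ix: "inv x \<in> P" and iy: "inv y \<in> P" using x y subgroup.m_inv_closed[OF Psub] by auto
  have "cm (x \<otimes> y) g = inv (x \<otimes> y) \<otimes> (c x \<otimes> c y)" using cm_eq[OF xyP] cxy by simp
  also have "inv (x \<otimes> y) = inv y \<otimes> inv x" using x y by (simp add: Pc inv_mult_group)
  also have "inv y \<otimes> inv x = inv x \<otimes> inv y" using Pab ix iy by blast
  also have "inv x \<otimes> inv y \<otimes> (c x \<otimes> c y) = inv x \<otimes> (inv y \<otimes> c x) \<otimes> c y"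
    using x y cP by (simp add: Pc m_assoc)
  also have "inv y \<otimes> c x = c x \<otimes> inv y" using Pab iy cP[OF x] by blast
  also have "inv x \<otimes> (c x \<otimes> inv y) \<otimes> c y = (inv x \<otimes> c x) \<otimes> (inv y \<otimes> c y)"
    using x y cP by (simp add: Pc m_assoc)
  finally show ?thesis using cm_eq x y by simp
qed

lemma cm_one: "g \<in> carrier G \<Longrightarrow> cm \<one> g = \<one>"
  unfolding cm_def by (simp add: m_assoc)

lemma cm_inv:
  assumes x: "x \<in> P" and g: "g \<in> carrier G"
  shows "cm (inv x) g = inv (cm x g)"
proof -
  have ix: "inv x \<in> P" using x subgroup.m_inv_closed[OF Psub] by auto
  have "cm (inv x) g \<otimes> cm x g = \<one>"
    using cm_mult[OF ix x g] cm_one[OF g] x by (simp add: Pc)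
  then show ?thesis using cm_closed ix x g by (simp add: Pc inv_equality)
qed

lemma P_comm_group: "comm_group (G\<lparr>carrier := P\<rparr>)"
proof -
  have "group (G\<lparr>carrier := P\<rparr>)" by (rule subgroup.subgroup_is_group[OF Psub is_group])
  then show ?thesis using Pab by (intro group.group_comm_groupI) auto
qed

lemma phi_hom_P: "a \<in> carrier A \<Longrightarrow> \<phi> a \<in> hom (G\<lparr>carrier := P\<rparr>) (G\<lparr>carrier := P\<rparr>)"
  by (auto simp: hom_def phi_P phi_mult Pc)

lemma pow_ordG: "x \<in> carrier G \<Longrightarrow> x [^] order G = \<one>"
  by (rule pow_order_eq_1)

lemma P_side:
  assumes a: "a \<in> carrier A" and b: "b \<in> carrier A" and ab: "a \<otimes>\<^bsub>A\<^esub> b = b \<otimes>\<^bsub>A\<^esub> a"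
    and b1: "b \<noteq> \<one>\<^bsub>A\<^esub>" and abj: "\<And>j. j < q \<Longrightarrow> a \<otimes>\<^bsub>A\<^esub> b [^]\<^bsub>A\<^esub> j \<noteq> \<one>\<^bsub>A\<^esub>"
    and h: "h \<in> H" "\<phi> a h = h" "\<phi> b h = h" and x: "x \<in> P"
  shows "cm x h \<in> T"
proof -
  let ?Q = "G\<lparr>carrier := P\<rparr>"
  interpret Q: comm_group ?Q by (rule P_comm_group)
  have hc: "h \<in> carrier G" using h Hc by blast
  define W where "W = {w \<in> P. cm w h \<in> T}"
  have W: "subgroup W ?Q"
  proof (rule subgroup_of_restrict[OF Psub])
    show "W \<subseteq> P" unfolding W_def by blast
    show "\<one> \<in> W" unfolding W_def using cm_one[OF hc] subgroup.one_closed[OF Psub] subgroup.one_closed[OF T_subgroup] by simp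
    show "x \<otimes> y \<in> W" if "x \<in> W" "y \<in> W" for x y
      using that subgroup.m_closed[OF Psub] subgroup.m_closed[OF T_subgroup] cm_mult[OF _ _ hc]
      unfolding W_def by auto
    show "inv x \<in> W" if "x \<in> W" for x
      using that subgroup.m_inv_closed[OF Psub] subgroup.m_inv_closed[OF T_subgroup] cm_inv[OF _ hc]
      unfolding W_def by auto
  qed
  have abjc: "a \<otimes>\<^bsub>A\<^esub> b [^]\<^bsub>A\<^esub> j \<in> carrier A" for j :: nat
    using a b by simp
  have fixh: "\<phi> (a \<otimes>\<^bsub>A\<^esub> b [^]\<^bsub>A\<^esub> j) h = h" for j :: nat
  proof -
    have "(\<phi> b ^^ j) h = h" using h by (induction j) auto
    then show ?thesis using a b hc h by (simp add: phi_comp phi_pow[symmetric] monoid.nat_pow_closed[OF group.is_monoid[OF A]])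
  qed
  have "x \<in> W"
  proof (rule Q.decomp[OF qp phi_hom_P[OF a] phi_hom_P[OF b] _ _ _ W])
    show "\<phi> a (\<phi> b y) = \<phi> b (\<phi> a y)" if "y \<in> carrier ?Q" for y
      using that phi_comm[OF a b ab] Pc by simp
    show "(\<phi> a ^^ q) y = y" if "y \<in> carrier ?Q" for y using that phi_q[OF a] Pc by simp
    show "(\<phi> b ^^ q) y = y" if "y \<in> carrier ?Q" for y using that phi_q[OF b] Pc by simp
    show "y [^]\<^bsub>?Q\<^esub> order G = \<one>\<^bsub>?Q\<^esub>" if "y \<in> carrier ?Q" for y
      using that pow_ordG Pc nat_pow_consistent[of y "order G" P] by simp
    show "coprime (order G) q" by (rule copG)
    show "w \<in> W" if j: "j < q" and w: "w \<in> carrier ?Q" and fw: "\<phi> a ((\<phi> b ^^ j) w) = w" for j w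
    proof -
      have wP: "w \<in> P" using w by simp
      have "\<phi> (a \<otimes>\<^bsub>A\<^esub> b [^]\<^bsub>A\<^esub> j) w = w"
        using fw a b wP by (simp add: phi_comp Pc phi_pow monoid.nat_pow_closed[OF group.is_monoid[OF A]])
      then have "cm w h \<in> T" using T_gen[OF abjc abj[OF j] wP _ h(1) fixh] by blast
      then show ?thesis unfolding W_def using wP by blast
    qed
    show "w \<in> W" if w: "w \<in> carrier ?Q" and fw: "\<phi> b w = w" for w
    proof -
      have wP: "w \<in> P" using w by simp
      have "cm w h \<in> T" using T_gen[OF b b1 wP fw h(1) h(3)] by blast
      then show ?thesis unfolding W_def using wP by blast
    qed
    show "x \<in> carrier ?Q" using x by simp
  qed
  then show ?thesis unfolding W_def by blast
qed

end

context L begin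

lemma hom_cm: "f \<in> hom G G \<Longrightarrow> x \<in> carrier G \<Longrightarrow> y \<in> carrier G \<Longrightarrow> f (cm x y) = cm (f x) (f y)"
proof -
  assume f: "f \<in> hom G G" and xy: "x \<in> carrier G" "y \<in> carrier G"
  interpret gh: group_hom G G f using f by (simp add: group_hom_def group_hom_axioms_def is_group)
  show ?thesis unfolding cm_def using xy by simp
qed

lemma conj_hom: "h \<in> carrier G \<Longrightarrow> (\<lambda>x. h \<otimes> x \<otimes> inv h) \<in> hom G G"
  by (auto simp: hom_def m_assoc)

definition gam where "gam i = lower_central G H i"

lemma gam_Suc: "gam (Suc i) = generate G ((\<lambda>(x, y). cm x y) ` (gam i \<times> H))"
  unfolding gam_def by (simp add: comm_subgroup_cm)

lemma img_sub_eq: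
  assumes "S \<subseteq> carrier G" "\<And>a y. a \<in> carrier A \<Longrightarrow> y \<in> S \<Longrightarrow> \<phi> a y \<in> S" "a \<in> carrier A"
  shows "\<phi> a ` S = S"
proof
  show "\<phi> a ` S \<subseteq> S" using assms by blast
  show "S \<subseteq> \<phi> a ` S"
  proof
    fix y assume y: "y \<in> S"
    have yc: "y \<in> carrier G" using y assms(1) by blast
    have "\<phi> a (\<phi> (inv\<^bsub>A\<^esub> a) y) = \<phi> (a \<otimes>\<^bsub>A\<^esub> inv\<^bsub>A\<^esub> a) y"
      using assms(3) yc phi_comp[of a "inv\<^bsub>A\<^esub> a" y] by simp
    also have "... = y" using assms(3) yc by (simp add: phi_unit)
    finally show "y \<in> \<phi> a ` S" using assms(2)[of "inv\<^bsub>A\<^esub> a" y] y assms(3) by (metis Agrp.inv_closed image_eqI)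
  qed
qed

lemma gam_props:
  "subgroup (gam i) G \<and> gam i \<subseteq> H \<and> (\<forall>h\<in>H. \<forall>x\<in>gam i. h \<otimes> x \<otimes> inv h \<in> gam i)
    \<and> (\<forall>a\<in>carrier A. \<forall>x\<in>gam i. \<phi> a x \<in> gam i)"
proof (induction i)
  case 0
  have "h \<otimes> x \<otimes> inv h \<in> H" if "h \<in> H" "x \<in> H" for h x
    using that subgroup.m_closed[OF Hsub] subgroup.m_inv_closed[OF Hsub] by blast
  then show ?case using Hsub phi_H by (simp add: gam_def)
next
  case (Suc i)
  then have sub: "subgroup (gam i) G" and gH: "gam i \<subseteq> H"
    and nor: "\<And>h x. h \<in> H \<Longrightarrow> x \<in> gam i \<Longrightarrow> h \<otimes> x \<otimes> inv h \<in> gam i"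
    and inv: "\<And>a x. a \<in> carrier A \<Longrightarrow> x \<in> gam i \<Longrightarrow> \<phi> a x \<in> gam i" by auto
  have gc: "x \<in> gam i \<Longrightarrow> x \<in> carrier G" for x using gH Hc by blast
  define S where "S = (\<lambda>(x, y). cm x y) ` (gam i \<times> H)"
  have Sc: "S \<subseteq> carrier G" unfolding S_def using gc Hc cm_closed by auto
  have S_H: "S \<subseteq> H" unfolding S_def cm_def using gH
    by (auto intro!: subgroup.m_closed[OF Hsub] subgroup.m_inv_closed[OF Hsub])
  have 1: "subgroup (gam (Suc i)) G" unfolding gam_Suc S_def[symmetric] by (rule generate_is_subgroup[OF Sc])
  have 2: "gam (Suc i) \<subseteq> H" unfolding gam_Suc S_def[symmetric] by (rule generate_subgroup_incl[OF S_H Hsub])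
  have gen_inv: "f x \<in> generate G S" if f: "f \<in> hom G G" and fS: "f ` S \<subseteq> S" and x: "x \<in> generate G S" for f x
  proof -
    interpret gh: group_hom G G f using f by (simp add: group_hom_def group_hom_axioms_def is_group)
    have "f x \<in> f ` generate G S" using x by blast
    also have "... = generate G (f ` S)" by (rule gh.generate_img[OF Sc, symmetric])
    also have "... \<subseteq> generate G S" by (rule mono_generate[OF fS])
    finally show ?thesis .
  qed
  have 3: "h \<otimes> x \<otimes> inv h \<in> gam (Suc i)" if h: "h \<in> H" and x: "x \<in> gam (Suc i)" for h x
  proof -
    have hc: "h \<in> carrier G" using h Hc by blast
    have "(\<lambda>x. h \<otimes> x \<otimes> inv h) ` S \<subseteq> S"
    proof
      fix z assume "z \<in> (\<lambda>x. h \<otimes> x \<otimes> inv h) ` S"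
      then obtain u v where uv: "u \<in> gam i" "v \<in> H" "z = h \<otimes> cm u v \<otimes> inv h" unfolding S_def by auto
      have "z = cm (h \<otimes> u \<otimes> inv h) (h \<otimes> v \<otimes> inv h)"
        using uv hom_cm[OF conj_hom[OF hc], of u v] gc Hc by simp
      moreover have "h \<otimes> v \<otimes> inv h \<in> H"
        using h uv subgroup.m_closed[OF Hsub] subgroup.m_inv_closed[OF Hsub] by blast
      ultimately show "z \<in> S" unfolding S_def using nor[OF h uv(1)] by blast
    qed
    then show ?thesis using gen_inv[OF conj_hom[OF hc]] x unfolding gam_Suc S_def[symmetric] by blast
  qed
  have 4: "\<phi> a x \<in> gam (Suc i)" if a: "a \<in> carrier A" and x: "x \<in> gam (Suc i)" for a x
  proof -
    have "\<phi> a ` S \<subseteq> S"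
    proof
      fix z assume "z \<in> \<phi> a ` S"
      then obtain u v where uv: "u \<in> gam i" "v \<in> H" "z = \<phi> a (cm u v)" unfolding S_def by auto
      have "z = cm (\<phi> a u) (\<phi> a v)" using uv phi_cm[OF a] gc Hc by simp
      then show "z \<in> S" unfolding S_def using inv[OF a uv(1)] phi_H[OF a uv(2)] by blast
    qed
    then show ?thesis using gen_inv[OF phi_hom[OF a]] x unfolding gam_Suc S_def[symmetric] by blast
  qed
  show ?case using 1 2 3 4 by blast
qed

lemma gam_sub: "subgroup (gam i) G" using gam_props by blast
lemma gam_H: "gam i \<subseteq> H" using gam_props by blast
lemma gam_norm: "h \<in> H \<Longrightarrow> x \<in> gam i \<Longrightarrow> h \<otimes> x \<otimes> inv h \<in> gam i" using gam_props by blast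
lemma gam_A: "a \<in> carrier A \<Longrightarrow> x \<in> gam i \<Longrightarrow> \<phi> a x \<in> gam i" using gam_props by blast
lemma gam_c: "x \<in> gam i \<Longrightarrow> x \<in> carrier G" using gam_H Hc by blast

lemma gam_comm: "x \<in> gam i \<Longrightarrow> y \<in> H \<Longrightarrow> cm x y \<in> gam (Suc i)"
  unfolding gam_Suc by (rule generate.incl) blast

lemma gam_dec: "gam (Suc i) \<subseteq> gam i"
  unfolding gam_Suc
proof (rule generate_subgroup_incl[OF _ gam_sub])
  show "(\<lambda>(x, y). cm x y) ` (gam i \<times> H) \<subseteq> gam i"
  proof clarify
    fix x y assume x: "x \<in> gam i" and y: "y \<in> H"
    have yc: "y \<in> carrier G" using y Hc by blast
    have iy: "inv y \<in> H" using y subgroup.m_inv_closed[OF Hsub] by blast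
    have "cm x y = inv x \<otimes> (inv y \<otimes> x \<otimes> inv (inv y))"
      unfolding cm_def using x yc gam_c by (simp add: m_assoc)
    then show "cm x y \<in> gam i"
      using gam_norm[OF iy x] x subgroup.m_closed[OF gam_sub] subgroup.m_inv_closed[OF gam_sub] by simp
  qed
qed

lemma gam_anti: "i \<le> j \<Longrightarrow> gam j \<subseteq> gam i"
proof (induction j rule: dec_induct)
  case base then show ?case by simp
next
  case (step j) then show ?case using gam_dec by blast
qed

lemma gam_0: "gam 0 = H" by (simp add: gam_def)

definition n0 where "n0 = (SOME n. gam n = {\<one>})"

lemma gam_n0: "gam n0 = {\<one>}"
proof -
  have "\<exists>n. gam n = {\<one>}" using nil by (simp add: nilpotent_subgroup_def gam_def)
  then show ?thesis unfolding n0_def by (rule someI_ex)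
qed

definition K where "K = fixed_points \<phi> H B"
definition Ks where "Ks i = K \<inter> gam i"

lemma K_H: "K \<subseteq> H" unfolding K_def fixed_points_def by blast
lemma K_c: "x \<in> K \<Longrightarrow> x \<in> carrier G" using K_H Hc by blast
lemma K_fix: "x \<in> K \<Longrightarrow> b \<in> B \<Longrightarrow> \<phi> b x = x" unfolding K_def fixed_points_def by blast

lemma K_sub: "subgroup K G"
proof (rule subgroupI)
  show "K \<subseteq> carrier G" using K_c by blast
  show "K \<noteq> {}"
  proof -
    have "\<one> \<in> K" unfolding K_def fixed_points_def
      using subgroup.one_closed[OF Hsub] phi_one Bc by auto
    then show ?thesis by blast
  qed
  show "inv x \<in> K" if "x \<in> K" for x
    using that subgroup.m_inv_closed[OF Hsub] phi_inv Bc K_c unfolding K_def fixed_points_def by auto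
  show "x \<otimes> y \<in> K" if "x \<in> K" "y \<in> K" for x y
    using that subgroup.m_closed[OF Hsub] phi_mult Bc K_c unfolding K_def fixed_points_def by auto
qed

lemma K_A: "a \<in> carrier A \<Longrightarrow> y \<in> K \<Longrightarrow> \<phi> a y \<in> K"
proof -
  assume a: "a \<in> carrier A" and y: "y \<in> K"
  have "\<phi> b (\<phi> a y) = \<phi> a y" if b: "b \<in> B" for b
  proof -
    have "\<phi> b (\<phi> a y) = \<phi> (b \<otimes>\<^bsub>A\<^esub> a) y" using a b Bc K_c y by (simp add: phi_comp)
    also have "... = \<phi> (a \<otimes>\<^bsub>A\<^esub> b) y" using B_central[OF b a] by simp
    also have "... = \<phi> a y" using a b Bc K_c y K_fix by (simp add: phi_comp)
    finally show ?thesis .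
  qed
  then show ?thesis using phi_H[OF a] y K_H unfolding K_def fixed_points_def by auto
qed

lemma Ks_sub: "subgroup (Ks i) G"
  unfolding Ks_def by (rule subgroups_Inter_pair[OF K_sub gam_sub])

lemma Ks_c: "x \<in> Ks i \<Longrightarrow> x \<in> carrier G" unfolding Ks_def using K_c by blast
lemma Ks_K: "Ks i \<subseteq> K" unfolding Ks_def by blast
lemma Ks_0: "Ks 0 = K" unfolding Ks_def gam_0 using K_H by blast
lemma Ks_A: "a \<in> carrier A \<Longrightarrow> x \<in> Ks i \<Longrightarrow> \<phi> a x \<in> Ks i"
  unfolding Ks_def using K_A gam_A by blast
lemma cm_in_sub: "subgroup S G \<Longrightarrow> x \<in> S \<Longrightarrow> y \<in> S \<Longrightarrow> cm x y \<in> S"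
  unfolding cm_def by (intro subgroup.m_closed subgroup.m_inv_closed) auto

lemma Ks_norm: "y \<in> K \<Longrightarrow> x \<in> Ks i \<Longrightarrow> y \<otimes> x \<otimes> inv y \<in> Ks i"
proof -
  assume y: "y \<in> K" and x: "x \<in> Ks i"
  have "y \<otimes> x \<otimes> inv y \<in> gam i" using gam_norm[of y x i] y x K_H unfolding Ks_def by blast
  moreover have "y \<otimes> x \<otimes> inv y \<in> K" using y x Ks_K
    by (intro subgroup.m_closed[OF K_sub] subgroup.m_inv_closed[OF K_sub]) auto
  ultimately show ?thesis unfolding Ks_def by blast
qed

lemma Ks_comm: "x \<in> Ks i \<Longrightarrow> y \<in> K \<Longrightarrow> cm x y \<in> Ks (Suc i)"
proof -
  assume x: "x \<in> Ks i" and y: "y \<in> K"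
  have "cm x y \<in> gam (Suc i)" using gam_comm[of x i y] x y K_H unfolding Ks_def by blast
  moreover have "cm x y \<in> K" using cm_in_sub[OF K_sub] x y Ks_K by blast
  ultimately show ?thesis unfolding Ks_def by blast
qed

lemma Ks_dec: "Ks (Suc i) \<subseteq> Ks i" unfolding Ks_def using gam_dec by blast

lemma Ks_anti: "i \<le> j \<Longrightarrow> Ks j \<subseteq> Ks i" unfolding Ks_def using gam_anti by blast

lemma Ks_big: "n0 \<le> j \<Longrightarrow> Ks j = {\<one>}"
proof -
  assume j: "n0 \<le> j"
  have "Ks j \<subseteq> {\<one>}" using Ks_anti[OF j] gam_n0 unfolding Ks_def by blast
  moreover have "\<one> \<in> Ks j" by (rule subgroup.one_closed[OF Ks_sub])
  ultimately show ?thesis by blast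
qed

lemma Ks_img: "a \<in> carrier A \<Longrightarrow> \<phi> a ` Ks i = Ks i"
  by (rule img_sub_eq) (auto simp: Ks_c Ks_A)

end

context L begin

lemma rcos_eq_iff:
  assumes "subgroup N G" "x \<in> carrier G" "y \<in> carrier G"
  shows "(N #> x = N #> y) = (x \<otimes> inv y \<in> N)"
proof
  assume e: "N #> x = N #> y"
  have "x \<in> N #> y" using rcos_self[OF assms(2,1)] e by simp
  then show "x \<otimes> inv y \<in> N" using subgroup.rcos_module_imp[OF assms(1) is_group assms(3)] by blast
next
  assume "x \<otimes> inv y \<in> N"
  then have "x \<in> N #> y" using subgroup.rcos_module_rev[OF assms(1) is_group assms(3,2)] by blast
  then show "N #> x = N #> y" using repr_independence[OF _ assms(3,1)] by simp
qed

definition Qi where "Qi i = (G\<lparr>carrier := Ks i\<rparr>) Mod (Ks (Suc i))"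
definition bar where "bar a X = \<phi> a ` X"

lemma GK_group: "group (G\<lparr>carrier := Ks i\<rparr>)"
  by (rule subgroup.subgroup_is_group[OF Ks_sub is_group])

lemma N_normal: "Ks (Suc i) \<lhd> G\<lparr>carrier := Ks i\<rparr>"
proof (rule group.normal_invI[OF GK_group])
  show "subgroup (Ks (Suc i)) (G\<lparr>carrier := Ks i\<rparr>)"
    by (rule subgroup_incl[OF Ks_sub Ks_sub Ks_dec])
  fix x h assume x: "x \<in> carrier (G\<lparr>carrier := Ks i\<rparr>)" and h: "h \<in> Ks (Suc i)"
  have "inv\<^bsub>G\<lparr>carrier := Ks i\<rparr>\<^esub> x = inv x" using x m_inv_consistent[OF Ks_sub] by simp
  then show "x \<otimes>\<^bsub>G\<lparr>carrier := Ks i\<rparr>\<^esub> h \<otimes>\<^bsub>G\<lparr>carrier := Ks i\<rparr>\<^esub> inv\<^bsub>G\<lparr>carrier := Ks i\<rparr>\<^esub> x \<in> Ks (Suc i)"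
    using Ks_norm[of x h "Suc i"] x h Ks_K by auto
qed

lemma Q_group: "group (Qi i)"
  unfolding Qi_def by (rule normal.factorgroup_is_group[OF N_normal])

lemma Q_carrier: "carrier (Qi i) = (\<lambda>x. Ks (Suc i) #> x) ` Ks i"
  unfolding Qi_def carrier_FactGroup by simp

lemma Q_one: "\<one>\<^bsub>Qi i\<^esub> = Ks (Suc i)"
  unfolding Qi_def by simp

lemma Q_mult: "x \<in> Ks i \<Longrightarrow> y \<in> Ks i \<Longrightarrow>
   (Ks (Suc i) #> x) \<otimes>\<^bsub>Qi i\<^esub> (Ks (Suc i) #> y) = Ks (Suc i) #> (x \<otimes> y)"
  unfolding Qi_def using normal.rcos_sum[OF N_normal, of x i y] by simp

lemma Q_comm_group: "comm_group (Qi i)"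
proof (rule group.group_comm_groupI[OF Q_group])
  fix X Y assume X: "X \<in> carrier (Qi i)" and Y: "Y \<in> carrier (Qi i)"
  then obtain x y where xy: "x \<in> Ks i" "y \<in> Ks i" "X = Ks (Suc i) #> x" "Y = Ks (Suc i) #> y"
    unfolding Q_carrier by blast
  have xyc: "x \<in> carrier G" "y \<in> carrier G" using xy Ks_c by auto
  have "Ks (Suc i) #> (x \<otimes> y) = Ks (Suc i) #> (y \<otimes> x)"
  proof (subst rcos_eq_iff[OF Ks_sub])
    have yK: "y \<in> K" using xy(2) Ks_K by blast
    have ix: "inv x \<in> Ks i" using xy(1) subgroup.m_inv_closed[OF Ks_sub] by blast
    have iy: "inv y \<in> K" using yK subgroup.m_inv_closed[OF K_sub] by blast
    have "x \<otimes> y \<otimes> inv (y \<otimes> x) = cm (inv x) (inv y)"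
      unfolding cm_def using xyc by (simp add: inv_mult_group m_assoc)
    then show "x \<otimes> y \<otimes> inv (y \<otimes> x) \<in> Ks (Suc i)" using Ks_comm[OF ix iy] by simp
  qed (use xyc in auto)
  then show "X \<otimes>\<^bsub>Qi i\<^esub> Y = Y \<otimes>\<^bsub>Qi i\<^esub> X" using xy Q_mult by simp
qed

lemma Q_pow: "x \<in> Ks i \<Longrightarrow> (Ks (Suc i) #> x) [^]\<^bsub>Qi i\<^esub> (k::nat) = Ks (Suc i) #> (x [^] k)"
  unfolding Qi_def using normal.FactGroup_pow[OF N_normal, of x i k] nat_pow_consistent by simp

lemma Q_ord: "X \<in> carrier (Qi i) \<Longrightarrow> X [^]\<^bsub>Qi i\<^esub> order G = \<one>\<^bsub>Qi i\<^esub>"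
proof -
  assume "X \<in> carrier (Qi i)"
  then obtain x where x: "x \<in> Ks i" "X = Ks (Suc i) #> x" unfolding Q_carrier by blast
  then have "X [^]\<^bsub>Qi i\<^esub> order G = Ks (Suc i) #> \<one>" using Q_pow pow_ordG Ks_c by simp
  also have "... = Ks (Suc i)" using Ks_c by (intro coset_mult_one) auto
  finally show ?thesis by (simp add: Q_one)
qed

lemma img_rcos:
  assumes "a \<in> carrier A" "S \<subseteq> carrier G" "x \<in> carrier G"
  shows "\<phi> a ` (S #> x) = (\<phi> a ` S) #> \<phi> a x"
proof -
  have "\<phi> a ` (S #> x) = (\<lambda>h. \<phi> a (h \<otimes> x)) ` S" unfolding r_coset_def by auto
  also have "... = (\<lambda>h. \<phi> a h \<otimes> \<phi> a x) ` S"
    using assms by (intro image_cong) (auto simp: phi_mult)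
  also have "... = (\<phi> a ` S) #> \<phi> a x" unfolding r_coset_def by auto
  finally show ?thesis .
qed

lemma bar_coset: "a \<in> carrier A \<Longrightarrow> x \<in> Ks i \<Longrightarrow> bar a (Ks (Suc i) #> x) = Ks (Suc i) #> \<phi> a x"
  unfolding bar_def using img_rcos[of a "Ks (Suc i)" x] Ks_c Ks_img by auto

lemma bar_hom: "a \<in> carrier A \<Longrightarrow> bar a \<in> hom (Qi i) (Qi i)"
proof -
  assume a: "a \<in> carrier A"
  have cl: "bar a X \<in> carrier (Qi i)" if "X \<in> carrier (Qi i)" for X
    using that bar_coset[OF a] Ks_A[OF a] unfolding Q_carrier by auto
  have ml: "bar a (X \<otimes>\<^bsub>Qi i\<^esub> Y) = bar a X \<otimes>\<^bsub>Qi i\<^esub> bar a Y"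
    if XY: "X \<in> carrier (Qi i)" "Y \<in> carrier (Qi i)" for X Y
  proof -
    obtain x y where xy: "x \<in> Ks i" "y \<in> Ks i" "X = Ks (Suc i) #> x" "Y = Ks (Suc i) #> y"
      using XY unfolding Q_carrier by blast
    have xyi: "x \<otimes> y \<in> Ks i" using xy subgroup.m_closed[OF Ks_sub] by blast
    show ?thesis
      using xy xyi Q_mult bar_coset[OF a] Ks_A[OF a] phi_mult[OF a] Ks_c by simp
  qed
  show ?thesis using cl ml by (auto simp: hom_def)
qed

lemma bar_pow: "a \<in> carrier A \<Longrightarrow> x \<in> Ks i \<Longrightarrow> (bar a ^^ k) (Ks (Suc i) #> x) = Ks (Suc i) #> (\<phi> a ^^ k) x"
proof (induction k)
  case 0 then show ?case by simp
next
  case (Suc k)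
  have "(\<phi> a ^^ k) x \<in> Ks i" using Suc.prems Ks_A by (induction k) auto
  then show ?case using Suc bar_coset by simp
qed

lemma bar_q: "a \<in> carrier A \<Longrightarrow> X \<in> carrier (Qi i) \<Longrightarrow> (bar a ^^ q) X = X"
  unfolding Q_carrier using bar_pow phi_q Ks_c by auto

lemma bar_comm:
  assumes a: "a \<in> carrier A" and c: "c \<in> carrier A"
    and comm: "\<And>y. y \<in> K \<Longrightarrow> \<phi> a (\<phi> c y) = \<phi> c (\<phi> a y)"
    and X: "X \<in> carrier (Qi i)"
  shows "bar a (bar c X) = bar c (bar a X)"
proof -
  obtain x where x: "x \<in> Ks i" "X = Ks (Suc i) #> x" using X unfolding Q_carrier by blast
  have xK: "x \<in> K" using x(1) Ks_K by blast
  have "bar a (bar c X) = Ks (Suc i) #> \<phi> a (\<phi> c x)"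
    using x bar_coset[OF c x(1)] bar_coset[OF a Ks_A[OF c x(1)]] by simp
  also have "... = Ks (Suc i) #> \<phi> c (\<phi> a x)" using comm[OF xK] by simp
  also have "... = bar c (bar a X)"
    using x bar_coset[OF a x(1)] bar_coset[OF c Ks_A[OF a x(1)]] by simp
  finally show ?thesis .
qed

end

context L begin

lemma Ks_one: "\<one> \<in> Ks i" by (rule subgroup.one_closed[OF Ks_sub])
lemma Ks_mult: "x \<in> Ks i \<Longrightarrow> y \<in> Ks i \<Longrightarrow> x \<otimes> y \<in> Ks i" by (rule subgroup.m_closed[OF Ks_sub])
lemma Ks_inv: "x \<in> Ks i \<Longrightarrow> inv x \<in> Ks i" by (rule subgroup.m_inv_closed[OF Ks_sub])
lemma K_mult: "x \<in> K \<Longrightarrow> y \<in> K \<Longrightarrow> x \<otimes> y \<in> K" by (rule subgroup.m_closed[OF K_sub])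
lemma K_inv: "x \<in> K \<Longrightarrow> inv x \<in> K" by (rule subgroup.m_inv_closed[OF K_sub])

lemma N_coset_one: "Ks (Suc i) #> \<one> = Ks (Suc i)"
  using Ks_c by (intro coset_mult_one) auto

lemma lift_step:
  assumes IH: "\<forall>f\<in>carrier A. \<forall>w\<in>K. inv w \<otimes> \<phi> f w \<in> Ks (Suc i) \<longrightarrow> (\<exists>y\<in>K. inv w \<otimes> y \<in> Ks (Suc i) \<and> \<phi> f y = y)"
    and f: "f \<in> carrier A" and w: "w \<in> K" and m: "inv w \<otimes> \<phi> f w \<in> Ks i"
  shows "\<exists>y\<in>K. inv w \<otimes> y \<in> Ks i \<and> \<phi> f y = y"
proof -
  let ?N = "Ks (Suc i)"
  let ?Q = "Qi i"
  interpret Q: comm_group ?Q by (rule Q_comm_group)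
  have wc: "w \<in> carrier G" using w K_c by blast
  define m where "m = inv w \<otimes> \<phi> f w"
  have mK: "m \<in> Ks i" using m unfolding m_def .
  have fwc: "\<phi> f w \<in> carrier G" using f wc phi_closed by blast
  define R where "R k = inv w \<otimes> (\<phi> f ^^ k) w" for k
  have fkc: "(\<phi> f ^^ k) w \<in> carrier G" for k using f wc by (induction k) (auto simp: phi_closed)
  have R_rec: "R (Suc k) = m \<otimes> \<phi> f (R k)" for k
    unfolding R_def m_def using f wc fwc fkc by (simp add: phi_mult phi_inv m_assoc phi_closed)
  have R_in: "R k \<in> Ks i" for k
  proof (induction k)
    case 0 then show ?case unfolding R_def using wc Ks_one by simp
  next
    case (Suc k) then show ?case using R_rec Ks_mult[OF mK Ks_A[OF f]] by simp
  qed
  have R_q: "R q = \<one>" unfolding R_def using phi_q[OF f wc] wc by simp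
  define M where "M = ?N #> m"
  have Mc: "M \<in> carrier ?Q" unfolding M_def Q_carrier using mK by blast
  have bh: "bar f \<in> hom ?Q ?Q" by (rule bar_hom[OF f])
  define F where "F t = (bar f ^^ t) M" for t
  have Fc: "F t \<in> carrier ?Q" for t unfolding F_def using Mc bh by (simp add: funpow_closed)
  have Qfin: "?N #> R k = (\<Otimes>\<^bsub>?Q\<^esub>t\<in>{..<k}. F t)" for k
  proof (induction k)
    case 0
    have "?N #> R 0 = ?N" unfolding R_def using wc N_coset_one by simp
    then show ?case by (simp add: Q_one)
  next
    case (Suc k)
    have "?N #> R (Suc k) = M \<otimes>\<^bsub>?Q\<^esub> (?N #> \<phi> f (R k))"
      unfolding R_rec M_def using Q_mult[OF mK Ks_A[OF f R_in]] by simp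
    also have "?N #> \<phi> f (R k) = bar f (?N #> R k)" using bar_coset[OF f R_in] by simp
    also have "... = bar f (\<Otimes>\<^bsub>?Q\<^esub>t\<in>{..<k}. F t)" using Suc by simp
    also have "... = (\<Otimes>\<^bsub>?Q\<^esub>t\<in>{..<k}. bar f (F t))"
      by (rule Q.hom_finprod[OF bh]) (auto simp: Fc)
    also have "... = (\<Otimes>\<^bsub>?Q\<^esub>t\<in>{..<k}. F (Suc t))" unfolding F_def by simp
    also have "M \<otimes>\<^bsub>?Q\<^esub> ... = (\<Otimes>\<^bsub>?Q\<^esub>t\<in>{..<Suc k}. F t)"
      using Q.finprod_lessThan_Suc_shift[of F k, OF Fc] unfolding F_def by simp
    finally show ?case .
  qed
  have norm: "(\<Otimes>\<^bsub>?Q\<^esub>t\<in>{..<q}. (bar f ^^ t) M) = \<one>\<^bsub>?Q\<^esub>"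
    using Qfin[of q] R_q N_coset_one unfolding F_def by (simp add: Q_one)
  obtain Z where Z: "Z \<in> carrier ?Q" "M \<otimes>\<^bsub>?Q\<^esub> bar f Z = Z"
    using Q.coboundary[OF bh Q_ord copG Mc norm] by blast
  obtain z where z: "z \<in> Ks i" "Z = ?N #> z" using Z(1) unfolding Q_carrier by blast
  have zc: "z \<in> carrier G" using z Ks_c by blast
  have fz: "\<phi> f z \<in> Ks i" using Ks_A[OF f z(1)] .
  have "?N #> (m \<otimes> \<phi> f z) = ?N #> z"
    using Z(2) z bar_coset[OF f z(1)] Q_mult[OF mK fz] unfolding M_def by simp
  then have e1: "(m \<otimes> \<phi> f z) \<otimes> inv z \<in> ?N"
    using rcos_eq_iff[OF Ks_sub] mK fz zc Ks_c Ks_mult by (meson Ks_mult)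
  define w' where "w' = w \<otimes> z"
  have w'K: "w' \<in> K" unfolding w'_def using w z Ks_K K_mult by blast
  have izK: "inv z \<in> K" using z Ks_K K_inv by blast
  have "inv w' \<otimes> \<phi> f w' = inv z \<otimes> ((m \<otimes> \<phi> f z) \<otimes> inv z) \<otimes> inv (inv z)"
    unfolding w'_def m_def using wc zc fwc f phi_closed by (simp add: phi_mult inv_mult_group m_assoc)
  also have "... \<in> ?N" by (rule Ks_norm[OF izK e1])
  finally have "inv w' \<otimes> \<phi> f w' \<in> ?N" .
  then obtain y where y: "y \<in> K" "inv w' \<otimes> y \<in> ?N" "\<phi> f y = y" using IH f w'K by blast
  have yc: "y \<in> carrier G" using y K_c by blast
  have "inv w \<otimes> y = z \<otimes> (inv w' \<otimes> y)" unfolding w'_def using wc zc yc by (simp add: inv_mult_group m_assoc)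
  also have "... \<in> Ks i" using Ks_mult[OF z(1)] y(2) Ks_dec by blast
  finally show ?thesis using y by blast
qed

lemma lift_all:
  "\<forall>f\<in>carrier A. \<forall>w\<in>K. inv w \<otimes> \<phi> f w \<in> Ks i \<longrightarrow> (\<exists>y\<in>K. inv w \<otimes> y \<in> Ks i \<and> \<phi> f y = y)"
proof (cases "n0 \<le> i")
  case True
  show ?thesis
  proof (intro ballI impI)
    fix f w assume f: "f \<in> carrier A" and w: "w \<in> K" and m: "inv w \<otimes> \<phi> f w \<in> Ks i"
    have wc: "w \<in> carrier G" using w K_c by blast
    have "inv w \<otimes> \<phi> f w = \<one>" using m Ks_big[OF True] by blast
    moreover have "\<phi> f w = w \<otimes> (inv w \<otimes> \<phi> f w)" using wc f phi_closed by simp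
    ultimately have "\<phi> f w = w" using wc by simp
    then show "\<exists>y\<in>K. inv w \<otimes> y \<in> Ks i \<and> \<phi> f y = y" using w wc Ks_one by (intro bexI[of _ w]) auto
  qed
next
  case False
  then have "i \<le> n0" by simp
  then show ?thesis
  proof (induction i rule: inc_induct)
    case base
    show ?case
    proof (intro ballI impI)
      fix f w assume f: "f \<in> carrier A" and w: "w \<in> K" and m: "inv w \<otimes> \<phi> f w \<in> Ks n0"
      have wc: "w \<in> carrier G" using w K_c by blast
      have "inv w \<otimes> \<phi> f w = \<one>" using m Ks_big[OF order_refl] by blast
      moreover have "\<phi> f w = w \<otimes> (inv w \<otimes> \<phi> f w)" using wc f phi_closed by simp
      ultimately have "\<phi> f w = w" using wc by simp
      then show "\<exists>y\<in>K. inv w \<otimes> y \<in> Ks n0 \<and> \<phi> f y = y" using w wc Ks_one by (intro bexI[of _ w]) auto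
    qed
  next
    case (step n)
    show ?case
    proof (intro ballI impI)
      fix f w assume "f \<in> carrier A" "w \<in> K" "inv w \<otimes> \<phi> f w \<in> Ks n"
      then show "\<exists>y\<in>K. inv w \<otimes> y \<in> Ks n \<and> \<phi> f y = y" by (rule lift_step[OF step.IH])
    qed
  qed
qed

definition Sgen where "Sgen = (\<Union>f \<in> carrier A - B. {y \<in> K. \<phi> f y = y})"
definition Mon where "Mon = generate G Sgen"

lemma Sgen_c: "Sgen \<subseteq> carrier G" unfolding Sgen_def using K_c by blast
lemma Mon_sub: "subgroup Mon G" unfolding Mon_def by (rule generate_is_subgroup[OF Sgen_c])

lemma gen_step:
  assumes a: "a \<in> carrier A" and c: "c \<in> carrier A" and cB: "c \<notin> B"
    and acB: "\<And>j. j < q \<Longrightarrow> a \<otimes>\<^bsub>A\<^esub> c [^]\<^bsub>A\<^esub> j \<notin> B"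
    and comm: "\<And>y. y \<in> K \<Longrightarrow> \<phi> a (\<phi> c y) = \<phi> c (\<phi> a y)"
    and IH: "Ks (Suc i) \<subseteq> Mon"
  shows "Ks i \<subseteq> Mon"
proof -
  let ?N = "Ks (Suc i)"
  let ?Q = "Qi i"
  interpret Q: comm_group ?Q by (rule Q_comm_group)
  define W where "W = (\<lambda>y. ?N #> y) ` (Ks i \<inter> Mon)"
  have W: "subgroup W ?Q"
  proof (rule Q.subgroupI)
    show "W \<subseteq> carrier ?Q" unfolding W_def Q_carrier by blast
    have "\<one> \<in> Ks i \<inter> Mon" using Ks_one[of i] subgroup.one_closed[OF Mon_sub] by blast
    then show "W \<noteq> {}" unfolding W_def by blast
    show "inv\<^bsub>?Q\<^esub> X \<in> W" if X: "X \<in> W" for X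
    proof -
      obtain y where y: "y \<in> Ks i" "y \<in> Mon" "X = ?N #> y" using X unfolding W_def by blast
      have yc: "y \<in> carrier G" using y Ks_c by blast
      have iy: "inv y \<in> Ks i" "inv y \<in> Mon" using y Ks_inv subgroup.m_inv_closed[OF Mon_sub] by auto
      have Xc: "X \<in> carrier ?Q" using y unfolding Q_carrier by blast
      have iyc: "?N #> inv y \<in> carrier ?Q" using iy unfolding Q_carrier by blast
      have "(?N #> inv y) \<otimes>\<^bsub>?Q\<^esub> (?N #> y) = ?N #> (inv y \<otimes> y)" by (rule Q_mult[OF iy(1) y(1)])
      also have "inv y \<otimes> y = \<one>" using yc by simp
      also have "?N #> \<one> = \<one>\<^bsub>?Q\<^esub>" using N_coset_one by (simp add: Q_one)
      finally have e: "(?N #> inv y) \<otimes>\<^bsub>?Q\<^esub> X = \<one>\<^bsub>?Q\<^esub>" using y(3) by simp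
      have "inv\<^bsub>?Q\<^esub> X = ?N #> inv y" by (rule Q.inv_equality[OF e Xc iyc])
      then show ?thesis unfolding W_def using iy by blast
    qed
    show "X \<otimes>\<^bsub>?Q\<^esub> Y \<in> W" if X: "X \<in> W" and Y: "Y \<in> W" for X Y
    proof -
      obtain x where x: "x \<in> Ks i" "x \<in> Mon" "X = ?N #> x" using X unfolding W_def by blast
      obtain y where y: "y \<in> Ks i" "y \<in> Mon" "Y = ?N #> y" using Y unfolding W_def by blast
      have "X \<otimes>\<^bsub>?Q\<^esub> Y = ?N #> (x \<otimes> y)" using x y Q_mult by simp
      moreover have "x \<otimes> y \<in> Ks i \<inter> Mon" using Ks_mult[OF x(1) y(1)] subgroup.m_closed[OF Mon_sub x(2) y(2)] by blast
      ultimately show ?thesis unfolding W_def by blast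
    qed
  qed
  have fixlift: "?N #> w \<in> W" if f: "f \<in> carrier A" "f \<notin> B" and w: "w \<in> Ks i"
    and e: "?N #> \<phi> f w = ?N #> w" for f w
  proof -
    have wc: "w \<in> carrier G" and wK: "w \<in> K" using w Ks_c Ks_K by auto
    have fwc: "\<phi> f w \<in> carrier G" using phi_closed f wc by blast
    have e1: "\<phi> f w \<otimes> inv w \<in> ?N" using rcos_eq_iff[OF Ks_sub fwc wc] e by simp
    have iwK: "inv w \<in> K" using wK K_inv by blast
    have "inv w \<otimes> \<phi> f w = inv w \<otimes> (\<phi> f w \<otimes> inv w) \<otimes> inv (inv w)"
      using wc fwc by (simp add: m_assoc)
    also have "... \<in> ?N" by (rule Ks_norm[OF iwK e1])
    finally have "inv w \<otimes> \<phi> f w \<in> ?N" .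
    then obtain y where y: "y \<in> K" "inv w \<otimes> y \<in> ?N" "\<phi> f y = y" using lift_all[of "Suc i"] f wK by blast
    have yc: "y \<in> carrier G" using y K_c by blast
    have "y = w \<otimes> (inv w \<otimes> y)" using wc yc by simp
    also have "... \<in> Ks i" using Ks_mult[OF w] y(2) Ks_dec by blast
    finally have yK: "y \<in> Ks i" .
    have "y \<in> Sgen" unfolding Sgen_def using f y by blast
    then have yM: "y \<in> Mon" unfolding Mon_def by (rule generate.incl)
    have "y \<otimes> inv w = w \<otimes> (inv w \<otimes> y) \<otimes> inv w" using wc yc by (simp add: m_assoc)
    also have "... \<in> ?N" by (rule Ks_norm[OF wK y(2)])
    finally have "?N #> y = ?N #> w" using rcos_eq_iff[OF Ks_sub yc wc] by simp
    then show ?thesis unfolding W_def using yK yM by (metis IntI image_eqI)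
  qed
  have cjc: "c [^]\<^bsub>A\<^esub> j \<in> carrier A" for j :: nat using c by simp
  have allW: "X \<in> W" if X: "X \<in> carrier ?Q" for X
  proof (rule Q.decomp[OF qp bar_hom[OF a] bar_hom[OF c] _ _ _ W Q_ord copG _ _ X])
    show "bar a (bar c Y) = bar c (bar a Y)" if "Y \<in> carrier ?Q" for Y
      by (rule bar_comm[OF a c comm that])
    show "(bar a ^^ q) Y = Y" if "Y \<in> carrier ?Q" for Y using bar_q[OF a that] .
    show "(bar c ^^ q) Y = Y" if "Y \<in> carrier ?Q" for Y using bar_q[OF c that] .
    show "Y \<in> W" if j: "j < q" and Y: "Y \<in> carrier ?Q" and fy: "bar a ((bar c ^^ j) Y) = Y" for j Y
    proof -
      obtain w where w: "w \<in> Ks i" "Y = ?N #> w" using Y unfolding Q_carrier by blast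
      have wc: "w \<in> carrier G" using w Ks_c by blast
      have "(bar c ^^ j) Y = ?N #> (\<phi> c ^^ j) w" using bar_pow[OF c w(1)] w by simp
      moreover have cjw: "(\<phi> c ^^ j) w \<in> Ks i" using w(1) Ks_A[OF c] by (induction j) auto
      ultimately have "bar a ((bar c ^^ j) Y) = ?N #> \<phi> a ((\<phi> c ^^ j) w)" using bar_coset[OF a cjw] by simp
      also have "\<phi> a ((\<phi> c ^^ j) w) = \<phi> (a \<otimes>\<^bsub>A\<^esub> c [^]\<^bsub>A\<^esub> j) w"
        using a c wc cjc by (simp add: phi_comp phi_pow)
      finally have "?N #> \<phi> (a \<otimes>\<^bsub>A\<^esub> c [^]\<^bsub>A\<^esub> j) w = ?N #> w" using fy w by simp
      then show ?thesis using fixlift[OF _ acB[OF j] w(1)] a cjc w by simp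
    qed
    show "Y \<in> W" if Y: "Y \<in> carrier ?Q" and fy: "bar c Y = Y" for Y
    proof -
      obtain w where w: "w \<in> Ks i" "Y = ?N #> w" using Y unfolding Q_carrier by blast
      have "?N #> \<phi> c w = ?N #> w" using fy w bar_coset[OF c w(1)] by simp
      then show ?thesis using fixlift[OF c cB w(1)] w by simp
    qed
  qed
  show ?thesis
  proof
    fix x assume x: "x \<in> Ks i"
    have xc: "x \<in> carrier G" using x Ks_c by blast
    have "?N #> x \<in> W" using allW x unfolding Q_carrier by blast
    then obtain y where y: "y \<in> Ks i" "y \<in> Mon" "?N #> x = ?N #> y" unfolding W_def by blast
    have yc: "y \<in> carrier G" using y Ks_c by blast
    have "x \<otimes> inv y \<in> ?N" using rcos_eq_iff[OF Ks_sub xc yc] y by simp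
    then have "x \<otimes> inv y \<in> Mon" using IH by blast
    then have "(x \<otimes> inv y) \<otimes> y \<in> Mon" using y(2) subgroup.m_closed[OF Mon_sub] by blast
    then show "x \<in> Mon" using xc yc by (simp add: m_assoc)
  qed
qed

lemma gen_all:
  assumes a: "a \<in> carrier A" and c: "c \<in> carrier A" and cB: "c \<notin> B"
    and acB: "\<And>j. j < q \<Longrightarrow> a \<otimes>\<^bsub>A\<^esub> c [^]\<^bsub>A\<^esub> j \<notin> B"
    and comm: "\<And>y. y \<in> K \<Longrightarrow> \<phi> a (\<phi> c y) = \<phi> c (\<phi> a y)"
  shows "Ks i \<subseteq> Mon"
proof (cases "n0 \<le> i")
  case True
  then show ?thesis using Ks_big[OF True] subgroup.one_closed[OF Mon_sub] by simp
next
  case False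
  then have "i \<le> n0" by simp
  then show ?thesis
  proof (induction i rule: inc_induct)
    case base
    then show ?case using Ks_big[OF order_refl] subgroup.one_closed[OF Mon_sub] by simp
  next
    case (step n)
    show ?case by (rule gen_step[OF a c cB acB comm step.IH])
  qed
qed

end

context L begin

lemma Agp_inst: "Agp A q B"
  unfolding Agp_def Agp_axioms_def using A qp ordA expA Bsub Bcen cardB by blast

lemma cm_mult_right:
  assumes x: "x \<in> carrier G" and h1: "h1 \<in> carrier G" and h2: "h2 \<in> carrier G"
  shows "cm x (h1 \<otimes> h2) = cm x h2 \<otimes> (cm x h1 \<otimes> cm (cm x h1) h2)"
proof -
  define z where "z = cm x h1"
  have zc: "z \<in> carrier G" unfolding z_def using x h1 cm_closed by blast
  have "z \<otimes> cm z h2 = inv h2 \<otimes> z \<otimes> h2" unfolding cm_def using zc h2 by (simp add: m_assoc)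
  moreover have "cm x (h1 \<otimes> h2) = cm x h2 \<otimes> (inv h2 \<otimes> z \<otimes> h2)"
    unfolding z_def cm_def using x h1 h2 by (simp add: m_assoc inv_mult_group)
  ultimately show ?thesis unfolding z_def by simp
qed

lemma cm_inv_right:
  assumes x: "x \<in> carrier G" and h: "h \<in> carrier G"
  shows "cm x (inv h) = inv (cm (h \<otimes> x \<otimes> inv h) h)"
proof -
  have "cm x (inv h) \<otimes> cm (h \<otimes> x \<otimes> inv h) h = \<one>"
    unfolding cm_def using x h by (simp add: m_assoc inv_mult_group)
  then show ?thesis using x h cm_closed by (intro inv_equality[symmetric]) auto
qed

lemma main: "comm_subgroup G P K \<subseteq> T"
proof -
  interpret Ag: Agp A q B by (rule Agp_inst)
  obtain a c where ac: "a \<in> carrier A" "c \<in> carrier A" "c \<notin> B"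
    "\<forall>j<q. a \<otimes>\<^bsub>A\<^esub> c [^]\<^bsub>A\<^esub> j \<notin> B" "\<exists>\<beta>\<in>B. c \<otimes>\<^bsub>A\<^esub> a = a \<otimes>\<^bsub>A\<^esub> c \<otimes>\<^bsub>A\<^esub> \<beta>"
    using Ag.pair by blast
  obtain \<beta> where \<beta>: "\<beta> \<in> B" "c \<otimes>\<^bsub>A\<^esub> a = a \<otimes>\<^bsub>A\<^esub> c \<otimes>\<^bsub>A\<^esub> \<beta>" using ac(5) by blast
  obtain b0 where b0: "b0 \<in> B" "b0 \<noteq> \<one>\<^bsub>A\<^esub>" using Ag.b0 by blast
  have comm: "\<phi> a (\<phi> c y) = \<phi> c (\<phi> a y)" if y: "y \<in> K" for y
  proof -
    have yc: "y \<in> carrier G" using y K_c by blast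
    have \<beta>c: "\<beta> \<in> carrier A" using \<beta> Bc by blast
    have "\<phi> c (\<phi> a y) = \<phi> (c \<otimes>\<^bsub>A\<^esub> a) y" using ac yc by (simp add: phi_comp)
    also have "... = \<phi> (a \<otimes>\<^bsub>A\<^esub> c \<otimes>\<^bsub>A\<^esub> \<beta>) y" using \<beta> by simp
    also have "... = \<phi> (a \<otimes>\<^bsub>A\<^esub> c) (\<phi> \<beta> y)" using ac \<beta>c yc by (simp add: phi_comp del: Agrp.m_assoc)
    also have "\<phi> \<beta> y = y" using K_fix[OF y \<beta>(1)] .
    also have "\<phi> (a \<otimes>\<^bsub>A\<^esub> c) y = \<phi> a (\<phi> c y)" using ac yc by (simp add: phi_comp)
    finally show ?thesis by simp
  qed
  have KM: "K \<subseteq> Mon" using gen_all[OF ac(1,2,3) _ comm, of 0] ac(4) Ks_0 by blast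
  define M where "M = {k \<in> carrier G. \<forall>x\<in>P. cm x k \<in> T}"
  have Tsub: "subgroup T G" by (rule T_subgroup)
  have M: "subgroup M G"
  proof (rule subgroupI)
    show "M \<subseteq> carrier G" unfolding M_def by blast
    have "\<one> \<in> M" unfolding M_def using Pc subgroup.one_closed[OF Tsub] by (auto simp: cm_def)
    then show "M \<noteq> {}" by blast
    show "inv k \<in> M" if k: "k \<in> M" for k
    proof -
      have kc: "k \<in> carrier G" using k unfolding M_def by blast
      have "cm x (inv k) \<in> T" if x: "x \<in> P" for x
      proof -
        have y: "k \<otimes> x \<otimes> inv k \<in> P" using normal_invE(2)[OF Pnorm kc x] .
        then have "cm (k \<otimes> x \<otimes> inv k) k \<in> T" using k unfolding M_def by blast
        then have "inv (cm (k \<otimes> x \<otimes> inv k) k) \<in> T" by (rule subgroup.m_inv_closed[OF Tsub])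
        then show ?thesis using cm_inv_right[OF Pc[OF x] kc] by simp
      qed
      then show ?thesis unfolding M_def using kc by simp
    qed
    show "k1 \<otimes> k2 \<in> M" if k: "k1 \<in> M" "k2 \<in> M" for k1 k2
    proof -
      have kc: "k1 \<in> carrier G" "k2 \<in> carrier G" using k unfolding M_def by auto
      have "cm x (k1 \<otimes> k2) \<in> T" if x: "x \<in> P" for x
      proof -
        have t1: "cm x k1 \<in> T" "cm x k2 \<in> T" using k x unfolding M_def by auto
        have zP: "cm x k1 \<in> P" using cm_P[OF x kc(1)] .
        have t2: "cm (cm x k1) k2 \<in> T" using k zP unfolding M_def by blast
        show ?thesis using cm_mult_right[OF Pc[OF x] kc] t1 t2 subgroup.m_closed[OF Tsub] by simp
      qed
      then show ?thesis unfolding M_def using kc by simp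
    qed
  qed
  have SM: "Sgen \<subseteq> M"
  proof
    fix k assume "k \<in> Sgen"
    then obtain f where f: "f \<in> carrier A" "f \<notin> B" and k: "k \<in> K" "\<phi> f k = k" unfolding Sgen_def by blast
    have kc: "k \<in> carrier G" using k K_c by blast
    have b0c: "b0 \<in> carrier A" using b0 Bc by blast
    have "cm x k \<in> T" if x: "x \<in> P" for x
    proof (rule P_side[OF f(1) b0c _ b0(2) _ _ k(2) K_fix[OF k(1) b0(1)] x])
      show "f \<otimes>\<^bsub>A\<^esub> b0 = b0 \<otimes>\<^bsub>A\<^esub> f" using B_central[OF b0(1) f(1)] by simp
      show "k \<in> H" using k K_H by blast
      show "f \<otimes>\<^bsub>A\<^esub> b0 [^]\<^bsub>A\<^esub> j \<noteq> \<one>\<^bsub>A\<^esub>" if "j < q" for j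
      proof
        assume e: "f \<otimes>\<^bsub>A\<^esub> b0 [^]\<^bsub>A\<^esub> j = \<one>\<^bsub>A\<^esub>"
        have bj: "b0 [^]\<^bsub>A\<^esub> j \<in> B" using Ag.B_pow[OF b0(1)] .
        have "f = inv\<^bsub>A\<^esub> (b0 [^]\<^bsub>A\<^esub> j)" using e f(1) b0c
          by (metis Agrp.inv_equality Agrp.nat_pow_closed)
        then have "f \<in> B" using Ag.B_inv[OF bj] by simp
        then show False using f by simp
      qed
    qed
    then show "k \<in> M" unfolding M_def using kc by blast
  qed
  have MonM: "Mon \<subseteq> M" unfolding Mon_def by (rule generate_subgroup_incl[OF SM M])
  show ?thesis unfolding comm_subgroup_cm
  proof (rule generate_subgroup_incl[OF _ Tsub])
    show "(\<lambda>(x, y). cm x y) ` (P \<times> K) \<subseteq> T"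
    proof clarify
      fix x k assume x: "x \<in> P" and k: "k \<in> K"
      then have "k \<in> M" using KM MonM by blast
      then show "cm x k \<in> T" using x unfolding M_def by blast
    qed
  qed
qed

end

theorem lemma2p4:
  fixes A :: "('a, 'c) monoid_scheme" and G :: "('g, 'd) monoid_scheme"
    and \<phi> :: "'a \<Rightarrow> 'g \<Rightarrow> 'g"
    and q p :: nat and B :: "'a set" and P H :: "'g set"
  assumes "prime q"
    and "group A"
    and "order A = q ^ 3"
    and "\<forall>a \<in> carrier A. a [^]\<^bsub>A\<^esub> q = \<one>\<^bsub>A\<^esub>"
    and "subgroup B A" and "B \<subseteq> group_center A" and "card B = q"
    and "group G" and "finite (carrier G)"
    and "group_action A (carrier G) \<phi>"
    and "\<forall>a \<in> carrier A. \<phi> a \<in> iso G G"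
    and "coprime (order G) q"
    and "subgroup P G" and "subgroup H G"
    and "\<forall>a \<in> carrier A. \<phi> a ` P = P"
    and "\<forall>a \<in> carrier A. \<phi> a ` H = H"
    and "P <#>\<^bsub>G\<^esub> H = carrier G"
    and "prime p"
    and "P \<lhd> G" and "\<exists>k. card P = p ^ k"
    and "nilpotent_subgroup G H" and "coprime (card H) p"
    and "\<forall>x \<in> P. \<forall>y \<in> P. x \<otimes>\<^bsub>G\<^esub> y = y \<otimes>\<^bsub>G\<^esub> x"
  shows "comm_subgroup G P (fixed_points \<phi> H B)
           \<subseteq> generate G (\<Union>a \<in> carrier A - {\<one>\<^bsub>A\<^esub>}.
                 comm_subgroup G (fixed_points \<phi> P {a}) (fixed_points \<phi> H {a}))"
proof -
  have "L G A \<phi> q B P H"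
    unfolding L_def L_axioms_def using assms by auto
  then interpret L G A \<phi> q B P H .
  show ?thesis using main unfolding K_def T_def .
qed

end
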